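(* Let $\mathbb{F}$ be a field of odd characteristic, let $n\ge 5$, and let $A\in\mathbb{M}_n(\mathbb{F})$ be a non-derogatory matrix with trace $c=\operatorname{Trace}(A)$. Then: (1) If $c\neq 0$, there exists $M\in\mathbb{M}_n(\mathbb{F})$ with $M^2=0$ such that $A+M$ is diagonalizable over $\mathbb{F}$ and its set of eigenvalues is exactly $\{0,c,-c\}$. (2) If $c=0$ and $n$ is odd, there exists $M\in\mathbb{M}_n(\mathbb{F})$ with $M^2=0$ such that $A+M$ is diagonalizable over $\mathbb{F}$ and its set of eigenvalues is exactly $\{0,1,-1\}$. (3) If $c=0$, $n$ is even and $\mathbb{F}\neq\mathbb{F}_3$, there exists $M\in\mathbb{M}_n(\mathbb{F})$ with $M^2=0$ such that $A+M$ is diagonalizable over $\mathbb{F}$ with at most $4$ distinct eigenvalues. In particular, if $\mathbb{F}$ is a finite field of odd cardinality $q\ge 5$, every non-derogatory matrix in $\mathbb{M}_n(\mathbb{F})$ with $n\ge 5$ can be written as $D+M$ with $D$ diagonalizable over $\mathbb{F}$ and $M^2=0$.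
   Context: A square matrix is non-derogatory if its minimal polynomial equals its characteristic polynomial (equivalently, it is similar to the companion matrix of its characteristic polynomial). A matrix $X\in\mathbb{M}_n(\mathbb{F})$ is diagonalizable if there is an invertible $U\in\mathbb{M}_n(\mathbb{F})$ with $U^{-1}XU$ diagonal. A matrix $M$ is square-zero if $M^2=0$. *)

theory Defs
  imports "Jordan_Normal_Form.Char_Poly"
begin

definition mat_trace :: "'a :: comm_ring_1 mat \<Rightarrow> 'a" where
  "mat_trace A = (\<Sum>i<dim_row A. A $$ (i, i))"

definition poly_mat :: "'a :: comm_ring_1 poly \<Rightarrow> 'a mat \<Rightarrow> 'a mat" where
  "poly_mat p A = foldr (\<lambda>c B. c \<cdot>\<^sub>m 1\<^sub>m (dim_row A) + A * B) (coeffs p) (0\<^sub>m (dim_row A) (dim_row A))"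

definition min_poly :: "'a :: field mat \<Rightarrow> 'a poly" where
  "min_poly A = (ARG_MIN degree p. monic p \<and> poly_mat p A = 0\<^sub>m (dim_row A) (dim_row A))"

definition non_derogatory :: "'a :: field mat \<Rightarrow> bool" where
  "non_derogatory A \<longleftrightarrow> min_poly A = char_poly A"

definition diagonalizable :: "'a :: field mat \<Rightarrow> bool" where
  "diagonalizable X \<longleftrightarrow> X \<in> carrier_mat (dim_row X) (dim_row X) \<and>
     (\<exists>U V. U \<in> carrier_mat (dim_row X) (dim_row X) \<and> V \<in> carrier_mat (dim_row X) (dim_row X) \<and>
      U * V = 1\<^sub>m (dim_row X) \<and> V * U = 1\<^sub>m (dim_row X) \<and> diagonal_mat (V * X * U))"

end

theory Submission
  imports Defs "HOL-Computational_Algebra.Polynomial_Factorial" "HOL-Computational_Algebra.Field_as_Ring"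
begin


typedef 'a wr = "UNIV :: 'a::field set" morphisms rep_wr abs_wr by auto

lemmas wr_simps = abs_wr_inverse[OF UNIV_I] rep_wr_inverse rep_wr_inject[symmetric]

instantiation wr :: (field) field
begin
definition "0 = abs_wr 0"
definition "1 = abs_wr 1"
definition "x + y = abs_wr (rep_wr x + rep_wr y)"
definition "x - y = abs_wr (rep_wr x - rep_wr y)"
definition "- x = abs_wr (- rep_wr x)"
definition "x * y = abs_wr (rep_wr x * rep_wr y)"
definition "inverse x = abs_wr (inverse (rep_wr x))"
definition "x div y = abs_wr (rep_wr x / rep_wr y)"
instance
  by standard (auto simp: wr_simps zero_wr_def one_wr_def plus_wr_def minus_wr_def uminus_wr_def
     times_wr_def inverse_wr_def divide_wr_def algebra_simps divide_inverse)
end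

instantiation wr ::
  (field) "{unique_euclidean_ring, normalization_euclidean_semiring, normalization_semidom_multiplicative}"
begin
definition [simp]: "normalize_wr = (normalize_field :: 'a wr \<Rightarrow> _)"
definition [simp]: "unit_factor_wr = (unit_factor_field :: 'a wr \<Rightarrow> _)"
definition [simp]: "modulo_wr = (mod_field :: 'a wr \<Rightarrow> _)"
definition [simp]: "euclidean_size_wr = (euclidean_size_field :: 'a wr \<Rightarrow> _)"
definition [simp]: "division_segment (x :: 'a wr) = 1"
instance
  by standard
    (simp_all add: dvd_field_iff field_split_simps split: if_splits)
end

instantiation wr :: (field) euclidean_ring_gcd
begin
definition gcd_wr :: "'a wr \<Rightarrow> 'a wr \<Rightarrow> 'a wr" where
  "gcd_wr = Euclidean_Algorithm.gcd"
definition lcm_wr :: "'a wr \<Rightarrow> 'a wr \<Rightarrow> 'a wr" where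
  "lcm_wr = Euclidean_Algorithm.lcm"
definition Gcd_wr :: "'a wr set \<Rightarrow> 'a wr" where
 "Gcd_wr = Euclidean_Algorithm.Gcd"
definition Lcm_wr :: "'a wr set \<Rightarrow> 'a wr" where
 "Lcm_wr = Euclidean_Algorithm.Lcm"
instance by standard (simp_all add: gcd_wr_def lcm_wr_def Gcd_wr_def Lcm_wr_def)
end

instance wr :: (field) field_gcd ..


lemma pm_carrier: assumes A: "A \<in> carrier_mat n n" shows "poly_mat p A \<in> carrier_mat n n"
proof -
  have "foldr (\<lambda>c B. c \<cdot>\<^sub>m 1\<^sub>m n + A * B) xs (0\<^sub>m n n) \<in> carrier_mat n n" for xs
    by (induct xs) (use A in auto)
  thus ?thesis using A unfolding poly_mat_def by auto
qed

lemma pm_zero[simp]: "poly_mat 0 A = 0\<^sub>m (dim_row A) (dim_row A)"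
  unfolding poly_mat_def by simp

lemma pm_pCons: assumes A: "A \<in> carrier_mat n n"
  shows "poly_mat (pCons a p) A = a \<cdot>\<^sub>m 1\<^sub>m n + A * poly_mat p A"
proof (cases "p = 0 \<and> a = 0")
  case True
  have "A * 0\<^sub>m n n = 0\<^sub>m n n" using A by simp
  moreover have "(0::'a) \<cdot>\<^sub>m 1\<^sub>m n + 0\<^sub>m n n = 0\<^sub>m n n"
    by (rule eq_matI) auto
  ultimately have "(0::'a) \<cdot>\<^sub>m 1\<^sub>m n + A * 0\<^sub>m n n = 0\<^sub>m n n" by simp
  thus ?thesis using True A by simp
next
  case False
  hence "coeffs (pCons a p) = a # coeffs p" by (auto simp: cCons_def)
  thus ?thesis using A unfolding poly_mat_def by simp
qed

lemma aux_add4: assumes X: "X \<in> carrier_mat n n" and Y: "Y \<in> carrier_mat n n"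
  shows "(a + b) \<cdot>\<^sub>m 1\<^sub>m n + (X + Y) = (a \<cdot>\<^sub>m 1\<^sub>m n + X) + (b \<cdot>\<^sub>m 1\<^sub>m n + (Y::'a::comm_ring_1 mat))"
  by (rule eq_matI) (use X Y in \<open>auto simp: algebra_simps\<close>)

lemma aux_smult2: assumes X: "X \<in> carrier_mat n n"
  shows "(c * a) \<cdot>\<^sub>m 1\<^sub>m n + c \<cdot>\<^sub>m X = c \<cdot>\<^sub>m (a \<cdot>\<^sub>m 1\<^sub>m n + (X::'a::comm_ring_1 mat))"
  by (rule eq_matI) (use X in \<open>auto simp: algebra_simps\<close>)

lemma pm_add: assumes A: "A \<in> carrier_mat n n"
  shows "poly_mat (p + q) A = poly_mat p A + poly_mat q A"
proof (induct p q rule: poly_induct2)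
  case 0
  show ?case using A by simp
next
  case (pCons a p b q)
  have P: "poly_mat p A \<in> carrier_mat n n" and Q: "poly_mat q A \<in> carrier_mat n n"
    using pm_carrier[OF A] by auto
  have "poly_mat (pCons a p + pCons b q) A = (a + b) \<cdot>\<^sub>m 1\<^sub>m n + A * (poly_mat p A + poly_mat q A)"
    using pCons A by (simp add: pm_pCons)
  also have "\<dots> = (a + b) \<cdot>\<^sub>m 1\<^sub>m n + (A * poly_mat p A + A * poly_mat q A)"
    using mult_add_distrib_mat[OF A P Q] by simp
  also have "\<dots> = (a \<cdot>\<^sub>m 1\<^sub>m n + A * poly_mat p A) + (b \<cdot>\<^sub>m 1\<^sub>m n + A * poly_mat q A)"
    by (rule aux_add4[OF mult_carrier_mat[OF A P] mult_carrier_mat[OF A Q]])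
  finally show ?case using A by (simp add: pm_pCons)
qed

lemma pm_smult: assumes A: "A \<in> carrier_mat n n"
  shows "poly_mat (Polynomial.smult c p) A = c \<cdot>\<^sub>m poly_mat p A"
proof (induct p)
  case 0
  show ?case using A by (auto intro!: eq_matI)
next
  case (pCons a p)
  have P: "poly_mat p A \<in> carrier_mat n n" using pm_carrier[OF A] by auto
  have "poly_mat (Polynomial.smult c (pCons a p)) A = (c * a) \<cdot>\<^sub>m 1\<^sub>m n + A * (c \<cdot>\<^sub>m poly_mat p A)"
    using pCons A by (simp add: pm_pCons)
  also have "A * (c \<cdot>\<^sub>m poly_mat p A) = c \<cdot>\<^sub>m (A * poly_mat p A)"
    using mult_smult_distrib[OF A P] by simp
  also have "(c * a) \<cdot>\<^sub>m 1\<^sub>m n + c \<cdot>\<^sub>m (A * poly_mat p A) = c \<cdot>\<^sub>m (a \<cdot>\<^sub>m 1\<^sub>m n + A * poly_mat p A)"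
    by (rule aux_smult2[OF mult_carrier_mat[OF A P]])
  finally show ?case using A by (simp add: pm_pCons)
qed

lemma zsmult: assumes "X \<in> carrier_mat n n" shows "(0::'a::comm_ring_1) \<cdot>\<^sub>m 1\<^sub>m n + X = X"
  by (rule eq_matI) (use assms in auto)

lemma pm_mult: assumes A: "A \<in> carrier_mat n n"
  shows "poly_mat (p * q) A = poly_mat p A * poly_mat q A"
proof (induct p)
  case 0
  have Q: "poly_mat q A \<in> carrier_mat n n" using pm_carrier[OF A] by auto
  show ?case using A Q by simp
next
  case (pCons a p)
  have P: "poly_mat p A \<in> carrier_mat n n" and Q: "poly_mat q A \<in> carrier_mat n n"
    using pm_carrier[OF A] by auto
  have e1: "poly_mat (pCons a p * q) A = poly_mat (Polynomial.smult a q + pCons 0 (p * q)) A" by simp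
  have e2: "poly_mat (Polynomial.smult a q + pCons 0 (p * q)) A
     = a \<cdot>\<^sub>m poly_mat q A + ((0::'a) \<cdot>\<^sub>m 1\<^sub>m n + A * (poly_mat p A * poly_mat q A))"
    unfolding pm_add[OF A] pm_smult[OF A] pm_pCons[OF A] pCons(2) ..
  have e3: "A * (poly_mat p A * poly_mat q A) = A * poly_mat p A * poly_mat q A"
    using assoc_mult_mat[OF A P Q] by simp
  have e4: "(0::'a) \<cdot>\<^sub>m 1\<^sub>m n + A * poly_mat p A * poly_mat q A = A * poly_mat p A * poly_mat q A"
    using zsmult[OF mult_carrier_mat[OF mult_carrier_mat[OF A P] Q]] .
  have e5: "(a \<cdot>\<^sub>m 1\<^sub>m n + A * poly_mat p A) * poly_mat q A = (a \<cdot>\<^sub>m 1\<^sub>m n) * poly_mat q A + A * poly_mat p A * poly_mat q A"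
    using add_mult_distrib_mat[OF smult_carrier_mat[OF one_carrier_mat] mult_carrier_mat[OF A P] Q] .
  have e6: "(a \<cdot>\<^sub>m 1\<^sub>m n) * poly_mat q A = a \<cdot>\<^sub>m poly_mat q A"
    using Q mult_smult_assoc_mat[of "1\<^sub>m n" n n "poly_mat q A" n a] by simp
  have "poly_mat (pCons a p * q) A = (a \<cdot>\<^sub>m 1\<^sub>m n + A * poly_mat p A) * poly_mat q A"
    unfolding e1 e2 e3 e4 e5 e6 ..
  thus ?case unfolding pm_pCons[OF A] .
qed

lemma pm_comm: assumes A: "A \<in> carrier_mat n n"
  shows "poly_mat p A * poly_mat q A = poly_mat q A * poly_mat p A"
  using pm_mult[OF A, of p q] pm_mult[OF A, of q p] by (simp add: mult.commute)

lemma pm_const: assumes A: "A \<in> carrier_mat n n"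
  shows "poly_mat [:c:] A = c \<cdot>\<^sub>m 1\<^sub>m n"
proof -
  have "poly_mat [:c:] A = c \<cdot>\<^sub>m 1\<^sub>m n + A * 0\<^sub>m n n" using pm_pCons[OF A, of c 0] A by simp
  also have "A * 0\<^sub>m n n = 0\<^sub>m n n" using A by simp
  finally show ?thesis by simp
qed

lemma smult_one_mat[simp]: "(1::'a::comm_ring_1) \<cdot>\<^sub>m 1\<^sub>m n = 1\<^sub>m n"
  by (rule eq_matI) auto

lemma pm_one: assumes A: "A \<in> carrier_mat n n"
  shows "poly_mat 1 A = 1\<^sub>m n"
  using pm_const[OF A, of 1] by (simp add: one_pCons)

lemma pm_dim[simp]: assumes A: "A \<in> carrier_mat n n"
  shows "dim_row (poly_mat p A) = n" "dim_col (poly_mat p A) = n"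
  using pm_carrier[OF A, of p] by auto

lemma smult_mat_mult_vec: assumes X: "(X :: 'a :: comm_ring_1 mat) \<in> carrier_mat nr nc" and z: "z \<in> carrier_vec nc"
  shows "(c \<cdot>\<^sub>m X) *\<^sub>v z = c \<cdot>\<^sub>v (X *\<^sub>v z)"
proof (rule eq_vecI)
  fix i assume "i < dim_vec (c \<cdot>\<^sub>v (X *\<^sub>v z))"
  then have i: "i < nr" using X by simp
  have d1: "i < dim_row (c \<cdot>\<^sub>m X)" "i < dim_row X" using X i by auto
  have d2: "dim_vec (row X i) = dim_vec z" using X z by auto
  have "((c \<cdot>\<^sub>m X) *\<^sub>v z) $ i = row (c \<cdot>\<^sub>m X) i \<bullet> z"
    by (rule index_mult_mat_vec[OF d1(1)])
  also have "\<dots> = (c \<cdot>\<^sub>v row X i) \<bullet> z" using row_smult[OF d1(2)] by simp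
  also have "\<dots> = c * (row X i \<bullet> z)" by (rule scalar_prod_smult_left[OF d2])
  also have "\<dots> = (c \<cdot>\<^sub>v (X *\<^sub>v z)) $ i" using d1(2) by simp
  finally show "((c \<cdot>\<^sub>m X) *\<^sub>v z) $ i = (c \<cdot>\<^sub>v (X *\<^sub>v z)) $ i" .
qed (use X in simp)

lemma pm_lin: assumes A: "A \<in> carrier_mat n n"
  shows "poly_mat [:b, 1:] A = b \<cdot>\<^sub>m 1\<^sub>m n + A"
proof -
  have "poly_mat [:b,1:] A = b \<cdot>\<^sub>m 1\<^sub>m n + A * poly_mat [:1:] A" by (rule pm_pCons[OF A])
  also have "poly_mat [:1:] A = 1\<^sub>m n" using pm_const[OF A, of 1] by simp
  finally show ?thesis using A by simp
qed

lemma pm_vec_mult: assumes A: "A \<in> carrier_mat n n" and z: "z \<in> carrier_vec n"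
  shows "poly_mat (p * q) A *\<^sub>v z = poly_mat p A *\<^sub>v (poly_mat q A *\<^sub>v z)"
  unfolding pm_mult[OF A] by (rule assoc_mult_mat_vec[OF pm_carrier[OF A] pm_carrier[OF A] z])

lemma pm_vec_add: assumes A: "A \<in> carrier_mat n n" and z: "z \<in> carrier_vec n"
  shows "poly_mat (p + q) A *\<^sub>v z = poly_mat p A *\<^sub>v z + poly_mat q A *\<^sub>v z"
  unfolding pm_add[OF A] by (rule add_mult_distrib_mat_vec[OF pm_carrier[OF A] pm_carrier[OF A] z])

lemma pm_vec_smult: assumes A: "A \<in> carrier_mat n n" and z: "z \<in> carrier_vec n"
  shows "poly_mat (Polynomial.smult c p) A *\<^sub>v z = c \<cdot>\<^sub>v (poly_mat p A *\<^sub>v z)"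
  unfolding pm_smult[OF A] by (rule smult_mat_mult_vec[OF pm_carrier[OF A] z])

lemma pm_vec_carrier: assumes A: "A \<in> carrier_mat n n"
  shows "poly_mat p A *\<^sub>v z \<in> carrier_vec n"
  unfolding carrier_vec_def using pm_dim(1)[OF A, of p] by simp

lemma pm_vec_sum: assumes A: "A \<in> carrier_mat n n" and z: "z \<in> carrier_vec n" and i: "i < n"
  and S: "finite S"
  shows "(poly_mat (\<Sum>x\<in>S. f x) A *\<^sub>v z) $ i = (\<Sum>x\<in>S. (poly_mat (f x) A *\<^sub>v z) $ i)"
  using S
proof (induct S)
  case empty
  show ?case using A i z by simp
next
  case (insert x S)
  have "poly_mat (sum f (insert x S)) A *\<^sub>v z = poly_mat (f x) A *\<^sub>v z + poly_mat (sum f S) A *\<^sub>v z"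
    using insert(1,2) pm_vec_add[OF A z] by simp
  moreover have "i < dim_vec (poly_mat (sum f S) A *\<^sub>v z)" using A i by simp
  ultimately show ?case using insert by (simp add: index_add_vec)
qed


lemma mult_zero_vec: assumes X: "(X :: 'a :: comm_ring_1 mat) \<in> carrier_mat nr n" shows "X *\<^sub>v 0\<^sub>v n = 0\<^sub>v nr"
  by (rule eq_vecI) (use X in \<open>auto simp: scalar_prod_def\<close>)

lemma mat_unit_col: assumes X: "(X :: 'a :: comm_ring_1 mat) \<in> carrier_mat nr n" and i: "i < nr" and j: "j < n"
  shows "(X *\<^sub>v unit_vec n j) $ i = X $$ (i, j)"
proof -
  have "(X *\<^sub>v unit_vec n j) $ i = row X i \<bullet> unit_vec n j" using X i by simp
  also have "\<dots> = row X i $ j" by (rule scalar_prod_right_unit[OF j])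
  also have "\<dots> = X $$ (i,j)" using X i j by simp
  finally show ?thesis .
qed

lemma mat_zero_by_units: assumes X: "(X :: 'a :: comm_ring_1 mat) \<in> carrier_mat nr n"
  and h: "\<And>j. j < n \<Longrightarrow> X *\<^sub>v unit_vec n j = 0\<^sub>v nr"
  shows "X = 0\<^sub>m nr n"
proof (rule eq_matI)
  fix i j assume i: "i < dim_row (0\<^sub>m nr n)" and j: "j < dim_col (0\<^sub>m nr n)"
  hence i': "i < nr" and j': "j < n" by auto
  have "X $$ (i,j) = (X *\<^sub>v unit_vec n j) $ i" using mat_unit_col[OF X i' j'] by simp
  also have "\<dots> = 0" using h[OF j'] i' by simp
  finally show "X $$ (i,j) = 0\<^sub>m nr n $$ (i,j)" using i' j' by simp
qed (use X in auto)

definition good :: "'a :: comm_ring_1 mat \<Rightarrow> nat \<Rightarrow> 'a vec \<Rightarrow> 'a poly \<Rightarrow> bool" where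
  "good A n z a \<longleftrightarrow> (\<forall>q. poly_mat q A *\<^sub>v z = 0\<^sub>v n \<longrightarrow> a dvd q)"

context
  fixes A :: "'b :: field_gcd mat" and n :: nat
  assumes A: "A \<in> carrier_mat n n"
begin

lemma pmv_comm_zero: assumes z: "z \<in> carrier_vec n" and az: "poly_mat a A *\<^sub>v z = 0\<^sub>v n"
  shows "poly_mat (b * a) A *\<^sub>v z = 0\<^sub>v n"
  unfolding pm_vec_mult[OF A z] az by (rule mult_zero_vec[OF pm_carrier[OF A]])

lemma good_combine:
  assumes u: "u \<in> carrier_vec n" and w: "w \<in> carrier_vec n"
    and gu: "good A n u a" and gw: "good A n w b"
    and au: "poly_mat a A *\<^sub>v u = 0\<^sub>v n" and bw: "poly_mat b A *\<^sub>v w = 0\<^sub>v n"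
    and cop: "coprime a b"
  shows "good A n (u + w) (a * b) \<and> poly_mat (a * b) A *\<^sub>v (u + w) = 0\<^sub>v n"
proof
  have z1: "poly_mat (b * a) A *\<^sub>v u = 0\<^sub>v n" by (rule pmv_comm_zero[OF u au])
  have z2: "poly_mat (a * b) A *\<^sub>v w = 0\<^sub>v n" by (rule pmv_comm_zero[OF w bw])
  have "poly_mat (a * b) A *\<^sub>v (u + w) = poly_mat (a * b) A *\<^sub>v u + poly_mat (a * b) A *\<^sub>v w"
    by (rule mult_add_distrib_mat_vec[OF pm_carrier[OF A] u w])
  also have "\<dots> = 0\<^sub>v n" using z1 z2 by (simp add: mult.commute)
  finally show "poly_mat (a * b) A *\<^sub>v (u + w) = 0\<^sub>v n" .
  show "good A n (u + w) (a * b)"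
    unfolding good_def
  proof (intro allI impI)
    fix q assume q: "poly_mat q A *\<^sub>v (u + w) = 0\<^sub>v n"
    have uw: "u + w \<in> carrier_vec n" using u w by simp
    have q2: "poly_mat (b * q) A *\<^sub>v (u + w) = 0\<^sub>v n" by (rule pmv_comm_zero[OF uw q])
    have q3: "poly_mat (a * q) A *\<^sub>v (u + w) = 0\<^sub>v n" by (rule pmv_comm_zero[OF uw q])
    have w0: "poly_mat (q * b) A *\<^sub>v w = 0\<^sub>v n" by (rule pmv_comm_zero[OF w bw])
    have u0: "poly_mat (q * a) A *\<^sub>v u = 0\<^sub>v n" by (rule pmv_comm_zero[OF u au])
    have "poly_mat (b * q) A *\<^sub>v u + poly_mat (b * q) A *\<^sub>v w = 0\<^sub>v n"
      using q2 mult_add_distrib_mat_vec[OF pm_carrier[OF A] u w] by simp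
    hence "poly_mat (b * q) A *\<^sub>v u = 0\<^sub>v n" using w0 right_zero_vec[OF pm_vec_carrier[OF A]] by (simp add: mult.commute)
    hence "a dvd b * q" using gu unfolding good_def by blast
    hence aq: "a dvd q" using cop by (simp add: coprime_dvd_mult_right_iff)
    have "poly_mat (a * q) A *\<^sub>v u + poly_mat (a * q) A *\<^sub>v w = 0\<^sub>v n"
      using q3 mult_add_distrib_mat_vec[OF pm_carrier[OF A] u w] by simp
    hence "poly_mat (a * q) A *\<^sub>v w = 0\<^sub>v n" using u0 left_zero_vec[OF pm_vec_carrier[OF A]] by (simp add: mult.commute)
    hence "b dvd a * q" using gw unfolding good_def by blast
    hence bq: "b dvd q" using cop by (simp add: coprime_dvd_mult_right_iff coprime_commute)
    show "a * b dvd q" by (rule divides_mult[OF aq bq cop])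
  qed
qed

lemma zero_mat_mult_vec: assumes v: "v \<in> carrier_vec n" shows "0\<^sub>m nr n *\<^sub>v v = (0\<^sub>v nr :: 'b vec)"
  by (rule eq_vecI) (use v in \<open>auto simp: scalar_prod_def\<close>)

lemma prime_part:
  assumes m0: "m \<noteq> 0" and mA: "poly_mat m A = 0\<^sub>m n n"
    and small: "\<forall>q. q \<noteq> 0 \<longrightarrow> degree q < degree m \<longrightarrow> poly_mat q A \<noteq> 0\<^sub>m n n"
    and p: "p \<in> prime_factors m"
  shows "\<exists>u \<in> carrier_vec n. good A n u (p ^ multiplicity p m) \<and>
           poly_mat (p ^ multiplicity p m) A *\<^sub>v u = 0\<^sub>v n"
proof -
  define e where "e = multiplicity p m"
  have pp: "prime p" using p by auto
  have pdvd: "p dvd m" using p by auto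
  have pnu: "\<not> is_unit p" using pp not_prime_unit by blast
  have p0: "p \<noteq> 0" using pp by auto
  have "0 < e" unfolding e_def using multiplicity_gt_zero_iff[OF m0 pnu] pdvd by simp
  then obtain e' where ee: "e = Suc e'" by (cases e) auto
  define r where "r = m div p ^ e"
  have mr: "m = p ^ e * r" unfolding r_def e_def using multiplicity_dvd[of p m] by simp
  define h where "h = p ^ e' * r"
  have mh: "m = p * h" unfolding h_def using mr ee by (simp add: mult.assoc)
  have h0: "h \<noteq> 0" using mh m0 by auto
  have "degree m = degree p + degree h" using mh p0 h0 by (simp add: degree_mult_eq)
  moreover have "degree p \<noteq> 0" using pnu p0 is_unit_iff_degree by blast
  ultimately have "degree h < degree m" by simp
  hence hA: "poly_mat h A \<noteq> 0\<^sub>m n n" using small h0 by blast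
  obtain j where j: "j < n" and hj: "poly_mat h A *\<^sub>v unit_vec n j \<noteq> 0\<^sub>v n"
    using mat_zero_by_units[OF pm_carrier[OF A], of h] hA by blast
  have ej: "unit_vec n j \<in> carrier_vec n" by simp
  define u where "u = poly_mat r A *\<^sub>v unit_vec n j"
  have u: "u \<in> carrier_vec n" unfolding u_def by (rule pm_vec_carrier[OF A])
  have ann: "poly_mat (p ^ e) A *\<^sub>v u = 0\<^sub>v n"
    unfolding u_def pm_vec_mult[OF A ej, symmetric] mr[symmetric] mA
    by (rule zero_mat_mult_vec[OF ej])
  have good: "good A n u (p ^ e)"
    unfolding good_def
  proof (intro allI impI)
    fix q assume qu: "poly_mat q A *\<^sub>v u = 0\<^sub>v n"
    show "p ^ e dvd q"
    proof (rule ccontr)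
      assume nd: "\<not> p ^ e dvd q"
      define k where "k = multiplicity p q"
      have ke: "k < e"
      proof (rule ccontr)
        assume "\<not> k < e" hence "e \<le> multiplicity p q" unfolding k_def by simp
        hence "p ^ e dvd q" by (rule multiplicity_dvd')
        with nd show False ..
      qed
      obtain s where qs: "q = p ^ k * s" and ns: "\<not> p dvd s"
      proof -
        have "q \<noteq> 0" using nd by auto
        from multiplicity_decompose'[OF this pnu] show ?thesis using that unfolding k_def by blast
      qed
      have cop: "coprime s (p ^ (e - k))" by (rule prime_imp_power_coprime[OF pp ns])
      define x where "x = fst (bezout_coefficients s (p ^ (e - k)))"
      define y where "y = snd (bezout_coefficients s (p ^ (e - k)))"
      have bez: "x * s + y * p ^ (e - k) = 1"
        using bezout_coefficients_fst_snd[of s "p ^ (e - k)"] cop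
        unfolding x_def y_def coprime_iff_gcd_eq_1 by simp
      define v where "v = poly_mat (p ^ k) A *\<^sub>v u"
      have v: "v \<in> carrier_vec n" unfolding v_def by (rule pm_vec_carrier[OF A])
      have sv: "poly_mat s A *\<^sub>v v = 0\<^sub>v n"
        unfolding v_def pm_vec_mult[OF A u, symmetric] using qu qs by (simp add: mult.commute)
      have pv: "poly_mat (p ^ (e - k)) A *\<^sub>v v = 0\<^sub>v n"
        unfolding v_def pm_vec_mult[OF A u, symmetric] power_add[symmetric] using ke ann by simp
      have "v = poly_mat 1 A *\<^sub>v v" unfolding pm_one[OF A] using v by simp
      also have "\<dots> = poly_mat (x * s) A *\<^sub>v v + poly_mat (y * p ^ (e - k)) A *\<^sub>v v"
        unfolding bez[symmetric] by (rule pm_vec_add[OF A v])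
      also have "\<dots> = 0\<^sub>v n"
        unfolding pm_vec_mult[OF A v] sv pv mult_zero_vec[OF pm_carrier[OF A]] by simp
      finally have v0: "v = 0\<^sub>v n" .
      have "poly_mat h A *\<^sub>v unit_vec n j = poly_mat (p ^ (e' - k) * (p ^ k * r)) A *\<^sub>v unit_vec n j"
        unfolding h_def using ke ee by (simp add: mult.assoc[symmetric] power_add[symmetric])
      also have "\<dots> = poly_mat (p ^ (e' - k)) A *\<^sub>v v"
        unfolding v_def u_def pm_vec_mult[OF A ej] ..
      also have "\<dots> = 0\<^sub>v n" unfolding v0 by (rule mult_zero_vec[OF pm_carrier[OF A]])
      finally show False using hj by simp
    qed
  qed
  show ?thesis using u good ann unfolding e_def by blast
qed

lemma all_parts:
  assumes m0: "m \<noteq> 0" and mA: "poly_mat m A = 0\<^sub>m n n"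
    and small: "\<forall>q. q \<noteq> 0 \<longrightarrow> degree q < degree m \<longrightarrow> poly_mat q A \<noteq> 0\<^sub>m n n"
  shows "finite S \<Longrightarrow> S \<subseteq> prime_factors m \<Longrightarrow> \<exists>z \<in> carrier_vec n.
      good A n z (\<Prod>p\<in>S. p ^ multiplicity p m) \<and> poly_mat (\<Prod>p\<in>S. p ^ multiplicity p m) A *\<^sub>v z = 0\<^sub>v n"
proof (induct S rule: finite_induct)
  case empty
  have "good A n (0\<^sub>v n) 1" unfolding good_def by simp
  moreover have "poly_mat 1 A *\<^sub>v 0\<^sub>v n = 0\<^sub>v n" unfolding pm_one[OF A] by simp
  ultimately show ?case by (intro bexI[of _ "0\<^sub>v n"]) auto
next
  case (insert p S)
  from insert obtain z where z: "z \<in> carrier_vec n" and gz: "good A n z (\<Prod>p\<in>S. p ^ multiplicity p m)"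
    and az: "poly_mat (\<Prod>p\<in>S. p ^ multiplicity p m) A *\<^sub>v z = 0\<^sub>v n" by auto
  have pS: "p \<in> prime_factors m" using insert by auto
  from prime_part[OF m0 mA small pS] obtain u where u: "u \<in> carrier_vec n"
    and gu: "good A n u (p ^ multiplicity p m)" and au: "poly_mat (p ^ multiplicity p m) A *\<^sub>v u = 0\<^sub>v n"
    by blast
  have cop: "coprime (p ^ multiplicity p m) (\<Prod>p\<in>S. p ^ multiplicity p m)"
  proof (rule prod_coprime_right)
    fix q assume q: "q \<in> S"
    have "q \<noteq> p" using q insert by auto
    moreover have "prime p" "prime q" using insert q by auto
    ultimately have "coprime p q" using primes_coprime by blast
    thus "coprime (p ^ multiplicity p m) (q ^ multiplicity q m)"
      by (simp add: coprime_power_left_iff coprime_power_right_iff)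
  qed
  from good_combine[OF u z gu gz au az cop]
  have "good A n (u + z) (p ^ multiplicity p m * (\<Prod>p\<in>S. p ^ multiplicity p m)) \<and>
    poly_mat (p ^ multiplicity p m * (\<Prod>p\<in>S. p ^ multiplicity p m)) A *\<^sub>v (u + z) = 0\<^sub>v n" .
  moreover have "u + z \<in> carrier_vec n" using u z by simp
  ultimately show ?case using insert by (intro bexI[of _ "u + z"]) auto
qed

lemma cyclic_core:
  assumes m0: "m \<noteq> 0" and mA: "poly_mat m A = 0\<^sub>m n n"
    and small: "\<forall>q. q \<noteq> 0 \<longrightarrow> degree q < degree m \<longrightarrow> poly_mat q A \<noteq> 0\<^sub>m n n"
  shows "\<exists>z \<in> carrier_vec n. good A n z m"
proof -
  have "finite (prime_factors m)" by simp
  from all_parts[OF m0 mA small this] obtain z where z: "z \<in> carrier_vec n"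
    and g: "good A n z (\<Prod>p\<in>prime_factors m. p ^ multiplicity p m)" by blast
  have "good A n z (normalize m)" using g unfolding prod_prime_factors[OF m0] .
  hence "good A n z m" unfolding good_def normalize_dvd_iff .
  thus ?thesis using z by blast
qed

end


lemma det_inv: assumes A: "(A :: 'a :: field mat) \<in> carrier_mat n n" and d: "det A \<noteq> 0"
  shows "\<exists>B \<in> carrier_mat n n. A * B = 1\<^sub>m n \<and> B * A = 1\<^sub>m n"
  using det_non_zero_imp_unit[OF A d, of undefined] unfolding Units_def ring_mat_def by auto

lemma coeff_sum_monom_lt: "coeff (\<Sum>j<n. monom (c j) j) k = (if k < n then c k else 0)"
  unfolding coeff_sum coeff_monom by (cases "k < n") auto

context
  fixes A :: "'a :: field mat" and n :: nat
  assumes A: "A \<in> carrier_mat n n"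
begin

lemma pm_X_pow: "poly_mat ([:0,1:] ^ j) A = A ^\<^sub>m j"
proof (induct j)
  case 0
  show ?case using pm_one[OF A] A by simp
next
  case (Suc j)
  have "poly_mat [:0,1:] A = A" using pm_lin[OF A, of 0] zsmult[OF A] by simp
  thus ?case unfolding power_Suc2 pm_mult[OF A] Suc by simp
qed

lemma pm_monom: "poly_mat (monom a j) A = a \<cdot>\<^sub>m A ^\<^sub>m j"
  unfolding monom_altdef pm_smult[OF A] pm_X_pow ..

definition krylov :: "'a vec \<Rightarrow> 'a mat" where
  "krylov v = mat n n (\<lambda>(i,j). (A ^\<^sub>m j *\<^sub>v v) $ i)"

lemma krylov_carrier: "krylov v \<in> carrier_mat n n" unfolding krylov_def by simp

lemma krylov_rel: assumes v: "v \<in> carrier_vec n" and c: "c \<in> carrier_vec n" and i: "i < n"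
  shows "(poly_mat (\<Sum>j<n. monom (c $ j) j) A *\<^sub>v v) $ i = (krylov v *\<^sub>v c) $ i"
proof -
  have "(poly_mat (\<Sum>j<n. monom (c $ j) j) A *\<^sub>v v) $ i = (\<Sum>j<n. (poly_mat (monom (c $ j) j) A *\<^sub>v v) $ i)"
    by (rule pm_vec_sum[OF A v i]) simp
  also have "\<dots> = (\<Sum>j<n. c $ j * (A ^\<^sub>m j *\<^sub>v v) $ i)"
  proof (rule sum.cong[OF refl])
    fix j assume j: "j \<in> {..<n}"
    have Aj: "A ^\<^sub>m j \<in> carrier_mat n n" using A by simp
    show "(poly_mat (monom (c $ j) j) A *\<^sub>v v) $ i = c $ j * (A ^\<^sub>m j *\<^sub>v v) $ i"
      unfolding pm_monom smult_mat_mult_vec[OF Aj v] using i carrier_matD[OF Aj] by simp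
  qed
  also have "\<dots> = (krylov v *\<^sub>v c) $ i"
    using i c unfolding krylov_def by (simp add: scalar_prod_def atLeast0LessThan mult.commute)
  finally show ?thesis .
qed

lemma vec_annihilator: assumes v: "v \<in> carrier_vec n"
  shows "\<exists>q. q \<noteq> 0 \<and> poly_mat q A *\<^sub>v v = 0\<^sub>v n"
proof (cases "det (krylov v) = 0")
  case True
  from this[unfolded det_0_iff_vec_prod_zero[OF krylov_carrier]] obtain c
    where c: "c \<in> carrier_vec n" "c \<noteq> 0\<^sub>v n" "krylov v *\<^sub>v c = 0\<^sub>v n" by blast
  define q where "q = (\<Sum>j<n. monom (c $ j) j)"
  obtain k where k: "k < n" "c $ k \<noteq> 0" using c(1,2) by (metis eq_vecI carrier_vecD index_zero_vec)
  have "coeff q k \<noteq> 0" unfolding q_def coeff_sum_monom_lt using k by simp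
  hence q0: "q \<noteq> 0" by auto
  have "poly_mat q A *\<^sub>v v = 0\<^sub>v n"
  proof (rule eq_vecI)
    fix i assume "i < dim_vec (0\<^sub>v n :: 'a vec)"
    hence i: "i < n" by simp
    show "(poly_mat q A *\<^sub>v v) $ i = 0\<^sub>v n $ i"
      unfolding q_def krylov_rel[OF v c(1) i] c(3) using i by simp
  qed (use A in simp)
  thus ?thesis using q0 by blast
next
  case False
  from det_inv[OF krylov_carrier False] obtain B where B: "B \<in> carrier_mat n n"
    and KB: "krylov v * B = 1\<^sub>m n" by blast
  define w where "w = A ^\<^sub>m n *\<^sub>v v"
  have w: "w \<in> carrier_vec n" unfolding w_def by (rule mult_mat_vec_carrier[OF pow_carrier_mat[OF A] v])
  define c where "c = - (B *\<^sub>v w)"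
  have c: "c \<in> carrier_vec n" unfolding c_def carrier_vec_def using B by simp
  have Kc: "krylov v *\<^sub>v c = - w"
  proof -
    have "krylov v *\<^sub>v (B *\<^sub>v w) = w"
      using assoc_mult_mat_vec[OF krylov_carrier B w, symmetric] KB w by simp
    moreover have "krylov v *\<^sub>v c = - (krylov v *\<^sub>v (B *\<^sub>v w))"
      unfolding c_def by (rule eq_vecI) (use carrier_matD[OF krylov_carrier[of v]] carrier_matD[OF B] in \<open>auto simp: scalar_prod_uminus_right\<close>)
    ultimately show ?thesis by simp
  qed
  define q where "q = monom 1 n + (\<Sum>j<n. monom (c $ j) j)"
  have "coeff q n = 1" unfolding q_def coeff_add coeff_sum_monom_lt by simp
  hence q0: "q \<noteq> 0" by auto
  have "poly_mat q A *\<^sub>v v = 0\<^sub>v n"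
  proof (rule eq_vecI)
    fix i assume "i < dim_vec (0\<^sub>v n :: 'a vec)"
    hence i: "i < n" by simp
    have An: "A ^\<^sub>m n \<in> carrier_mat n n" using A by simp
    have "(poly_mat q A *\<^sub>v v) $ i = (poly_mat (monom 1 n) A *\<^sub>v v) $ i
       + (poly_mat (\<Sum>j<n. monom (c $ j) j) A *\<^sub>v v) $ i"
      unfolding q_def pm_vec_add[OF A v] using i A by simp
    also have "\<dots> = w $ i + (- w) $ i"
      unfolding krylov_rel[OF v c i] Kc pm_monom w_def smult_mat_mult_vec[OF An v] using i An v by simp
    also have "\<dots> = 0" using i w by simp
    finally show "(poly_mat q A *\<^sub>v v) $ i = 0\<^sub>v n $ i" using i by simp
  qed (use A in simp)
  thus ?thesis using q0 by blast
qed

lemma mat_annihilator: "\<exists>Q. Q \<noteq> 0 \<and> poly_mat Q A = 0\<^sub>m n n"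
proof -
  have "\<forall>j\<in>{..<n}. \<exists>q. q \<noteq> 0 \<and> poly_mat q A *\<^sub>v unit_vec n j = 0\<^sub>v n"
    using vec_annihilator by simp
  from bchoice[OF this] obtain f where f: "\<And>j. j < n \<Longrightarrow> f j \<noteq> 0 \<and> poly_mat (f j) A *\<^sub>v unit_vec n j = 0\<^sub>v n"
    by auto
  define Q where "Q = (\<Prod>j<n. f j)"
  have Q0: "Q \<noteq> 0" unfolding Q_def using f by auto
  have "poly_mat Q A = 0\<^sub>m n n"
  proof (rule mat_zero_by_units[OF pm_carrier[OF A]])
    fix j assume j: "j < n"
    have "Q = (\<Prod>k\<in>{..<n} - {j}. f k) * f j" unfolding Q_def
      using prod.remove[of "{..<n}" j f] j by (simp add: mult.commute)
    hence "poly_mat Q A *\<^sub>v unit_vec n j = poly_mat (\<Prod>k\<in>{..<n} - {j}. f k) A *\<^sub>v (poly_mat (f j) A *\<^sub>v unit_vec n j)"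
      using pm_vec_mult[OF A unit_vec_carrier] by simp
    also have "\<dots> = 0\<^sub>v n" using f[OF j] mult_zero_vec[OF pm_carrier[OF A]] by simp
    finally show "poly_mat Q A *\<^sub>v unit_vec n j = 0\<^sub>v n" .
  qed
  thus ?thesis using Q0 by blast
qed

lemma smult_zero_mat: "(c::'a) \<cdot>\<^sub>m 0\<^sub>m n n = 0\<^sub>m n n" by (rule eq_matI) auto

lemma min_poly_facts: assumes nd: "non_derogatory A"
  shows "poly_mat (char_poly A) A = 0\<^sub>m n n \<and> (\<forall>q. q \<noteq> 0 \<longrightarrow> poly_mat q A = 0\<^sub>m n n \<longrightarrow> n \<le> degree q)"
proof -
  have dA: "dim_row A = n" using A by simp
  let ?P = "\<lambda>p. monic p \<and> poly_mat p A = 0\<^sub>m (dim_row A) (dim_row A)"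
  have mk: "?P (Polynomial.smult (inverse (lead_coeff q)) q) \<and> degree (Polynomial.smult (inverse (lead_coeff q)) q) = degree q"
    if "q \<noteq> 0" "poly_mat q A = 0\<^sub>m n n" for q
    using that unfolding dA pm_smult[OF A] by (simp add: lead_coeff_smult smult_zero_mat)
  obtain Q where "Q \<noteq> 0" "poly_mat Q A = 0\<^sub>m n n" using mat_annihilator by blast
  from mk[OF this] have PQ: "?P (Polynomial.smult (inverse (lead_coeff Q)) Q)" by blast
  from arg_min_nat_lemma[of ?P, OF PQ, of degree]
  have mp: "?P (min_poly A)" and mmin: "\<forall>y. ?P y \<longrightarrow> degree (min_poly A) \<le> degree y"
    unfolding min_poly_def by auto
  have cp: "min_poly A = char_poly A" using nd unfolding non_derogatory_def .
  have dc: "degree (char_poly A) = n" using degree_monic_char_poly[OF A] by simp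
  show ?thesis
  proof (intro conjI allI impI)
    show "poly_mat (char_poly A) A = 0\<^sub>m n n" using mp cp dA by simp
    fix q assume "q \<noteq> 0" "poly_mat q A = 0\<^sub>m n n"
    from mk[OF this] mmin cp dc show "n \<le> degree q" by metis
  qed
qed

end


lemma comm_ring_hom_abs: "comm_ring_hom (abs_wr :: 'a::field \<Rightarrow> 'a wr)"
  by unfold_locales (simp_all add: plus_wr_def times_wr_def one_wr_def zero_wr_def wr_simps)

lemma comm_ring_hom_rep: "comm_ring_hom (rep_wr :: 'a::field wr \<Rightarrow> 'a)"
  by unfold_locales (simp_all add: plus_wr_def times_wr_def one_wr_def zero_wr_def wr_simps)

context comm_ring_hom
begin

lemma hom_aux: assumes X: "X \<in> carrier_mat n n"
  shows "map_mat hom (a \<cdot>\<^sub>m 1\<^sub>m n + X) = hom a \<cdot>\<^sub>m 1\<^sub>m n + map_mat hom X"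
  by (rule eq_matI) (use X in \<open>auto simp: hom_distribs\<close>)

lemma pm_hom: assumes A: "A \<in> carrier_mat n n"
  shows "poly_mat (map_poly hom q) (map_mat hom A) = map_mat hom (poly_mat q A)"
proof (induct q)
  case 0
  show ?case using A by (auto intro!: eq_matI)
next
  case (pCons a q)
  have A': "map_mat hom A \<in> carrier_mat n n" using A by simp
  have P: "poly_mat q A \<in> carrier_mat n n" by (rule pm_carrier[OF A])
  have "poly_mat (map_poly hom (pCons a q)) (map_mat hom A)
      = hom a \<cdot>\<^sub>m 1\<^sub>m n + map_mat hom A * map_mat hom (poly_mat q A)"
    unfolding map_poly_pCons_hom pm_pCons[OF A'] pCons(2) ..
  also have "map_mat hom A * map_mat hom (poly_mat q A) = map_mat hom (A * poly_mat q A)"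
    by (rule mat_hom_mult[symmetric, OF A P])
  also have "hom a \<cdot>\<^sub>m 1\<^sub>m n + \<dots> = map_mat hom (a \<cdot>\<^sub>m 1\<^sub>m n + A * poly_mat q A)"
    by (rule hom_aux[symmetric, OF mult_carrier_mat[OF A P]])
  finally show ?case unfolding pm_pCons[OF A] .
qed

end

lemma abs_wr_eq0: "(abs_wr x = 0) = (x = (0::'a::field))"
proof
  assume "abs_wr x = 0"
  hence "rep_wr (abs_wr x) = rep_wr (abs_wr 0)" unfolding zero_wr_def by simp
  thus "x = 0" unfolding abs_wr_inverse[OF UNIV_I] .
qed (simp add: zero_wr_def)

lemma rep_wr_eq0: "(rep_wr x = 0) = (x = (0::'a::field wr))"
proof
  assume "rep_wr x = 0"
  hence "abs_wr (rep_wr x) = abs_wr 0" by simp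
  thus "x = 0" unfolding rep_wr_inverse zero_wr_def .
qed (simp add: zero_wr_def abs_wr_inverse)

theorem cyclic_vector:
  fixes A :: "'a :: field mat"
  assumes A: "A \<in> carrier_mat n n" and nd: "non_derogatory A"
  shows "\<exists>z \<in> carrier_vec n. \<forall>q. q \<noteq> 0 \<longrightarrow> degree q < n \<longrightarrow> poly_mat q A *\<^sub>v z \<noteq> 0\<^sub>v n"
proof -
  interpret a: comm_ring_hom "abs_wr :: 'a \<Rightarrow> 'a wr" by (rule comm_ring_hom_abs)
  interpret r: comm_ring_hom "rep_wr :: 'a wr \<Rightarrow> 'a" by (rule comm_ring_hom_rep)
  define m where "m = char_poly A"
  from min_poly_facts[OF A nd] have mA: "poly_mat m A = 0\<^sub>m n n"
    and small: "\<And>q. q \<noteq> 0 \<Longrightarrow> poly_mat q A = 0\<^sub>m n n \<Longrightarrow> n \<le> degree q" unfolding m_def by auto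
  have dm: "degree m = n" unfolding m_def using degree_monic_char_poly[OF A] by simp
  have m0: "m \<noteq> 0" unfolding m_def using degree_monic_char_poly[OF A] by auto
  define A' where "A' = map_mat abs_wr A"
  define m' where "m' = map_poly abs_wr m"
  have A': "A' \<in> carrier_mat n n" unfolding A'_def using A by simp
  have degabs: "degree (map_poly abs_wr p) = degree p" for p :: "'a poly"
    by (rule degree_map_poly) (simp add: abs_wr_eq0)
  have degrep: "degree (map_poly rep_wr p) = degree p" for p :: "'a wr poly"
    by (rule degree_map_poly) (simp add: rep_wr_eq0)
  have m'0: "m' \<noteq> 0" unfolding m'_def using m0 by (simp add: map_poly_eq_0_iff abs_wr_eq0)
  have dm': "degree m' = n" unfolding m'_def degabs dm ..
  have m'A: "poly_mat m' A' = 0\<^sub>m n n"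
    unfolding m'_def A'_def a.pm_hom[OF A] mA by (auto intro!: eq_matI)
  have AA: "map_mat rep_wr A' = A" unfolding A'_def by (rule eq_matI) (auto simp: wr_simps)
  have small': "\<forall>q. q \<noteq> 0 \<longrightarrow> degree q < degree m' \<longrightarrow> poly_mat q A' \<noteq> 0\<^sub>m n n"
  proof (intro allI impI notI)
    fix q assume q0: "q \<noteq> 0" and dq: "degree q < degree m'" and qA: "poly_mat q A' = 0\<^sub>m n n"
    define p where "p = map_poly rep_wr q"
    have p0: "p \<noteq> 0" unfolding p_def using q0 by (simp add: map_poly_eq_0_iff rep_wr_eq0)
    have "poly_mat p A = map_mat rep_wr (poly_mat q A')"
      unfolding p_def AA[symmetric] by (rule r.pm_hom[OF A'])
    also have "\<dots> = 0\<^sub>m n n" unfolding qA by (auto intro!: eq_matI)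
    finally have "n \<le> degree p" by (rule small[OF p0])
    thus False using dq dm' unfolding p_def degrep by simp
  qed
  from cyclic_core[OF A' m'0 m'A small'] obtain z' where z': "z' \<in> carrier_vec n"
    and g: "good A' n z' m'" by blast
  define z where "z = map_vec rep_wr z'"
  have z: "z \<in> carrier_vec n" unfolding z_def using z' by simp
  have zz: "map_vec abs_wr z = z'" unfolding z_def by (rule eq_vecI) (auto simp: wr_simps)
  show ?thesis
  proof (intro bexI[OF _ z] allI impI notI)
    fix q assume q0: "q \<noteq> 0" and dq: "degree q < n" and qz: "poly_mat q A *\<^sub>v z = 0\<^sub>v n"
    have "poly_mat (map_poly abs_wr q) A' *\<^sub>v z' = map_vec abs_wr (poly_mat q A *\<^sub>v z)"
      unfolding A'_def a.pm_hom[OF A] zz[symmetric]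
      by (rule a.mult_mat_vec_hom[symmetric, OF pm_carrier[OF A] z])
    also have "\<dots> = 0\<^sub>v n" unfolding qz by (rule a.vec_hom_zero)
    finally have "m' dvd map_poly abs_wr q" using g unfolding good_def by blast
    moreover have "map_poly abs_wr q \<noteq> 0" using q0 by (simp add: map_poly_eq_0_iff abs_wr_eq0)
    ultimately have "degree m' \<le> degree (map_poly abs_wr q)" by (rule dvd_imp_degree_le)
    thus False using dq dm' degabs by simp
  qed
qed


lemma sum_single: assumes "finite S" "a \<in> S" "\<And>m. m \<in> S \<Longrightarrow> m \<noteq> a \<Longrightarrow> f m = 0"
  shows "sum f S = f a"
proof -
  have "sum f S = f a + sum f (S - {a})" using assms(1,2) by (rule sum.remove)
  also have "sum f (S - {a}) = 0" using assms(3) by (intro sum.neutral) auto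
  finally show ?thesis by simp
qed

primrec gp :: "(nat \<Rightarrow> 'a::field) \<Rightarrow> nat \<Rightarrow> 'a poly" where
  "gp \<mu> 0 = 1"
| "gp \<mu> (Suc i) = [:- \<mu> i, 1:] * gp \<mu> i"

lemma gp_monic: "degree (gp \<mu> i) = i \<and> lead_coeff (gp \<mu> i) = 1"
proof (induct i)
  case 0 show ?case by simp
next
  case (Suc i)
  have lc: "lead_coeff (gp \<mu> i) = 1" using Suc by blast
  have g0: "gp \<mu> i \<noteq> 0"
  proof
    assume "gp \<mu> i = 0" hence "lead_coeff (gp \<mu> i) = 0" by simp
    thus False using lc by simp
  qed
  have l0: "[:- \<mu> i, 1:] \<noteq> 0" by simp
  have "degree (gp \<mu> (Suc i)) = degree [:- \<mu> i, 1:] + degree (gp \<mu> i)"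
    unfolding gp.simps by (rule degree_mult_eq[OF l0 g0])
  moreover have "lead_coeff (gp \<mu> (Suc i)) = 1"
    unfolding gp.simps lead_coeff_mult lc by simp
  ultimately show ?case using Suc by simp
qed

lemma gp_degree[simp]: "degree (gp \<mu> i) = i" using gp_monic by blast

lemma newton_basis:
  fixes A :: "'a :: field mat"
  assumes A: "A \<in> carrier_mat n n" and nd: "non_derogatory A"
  shows "\<exists>P Pi. P \<in> carrier_mat n n \<and> Pi \<in> carrier_mat n n \<and> P * Pi = 1\<^sub>m n \<and> Pi * P = 1\<^sub>m n \<and>
     (\<forall>r i. r < n \<longrightarrow> Suc i < n \<longrightarrow> (Pi * A * P) $$ (r,i) = (if r = i then \<mu> i else if r = Suc i then 1 else 0))"
proof -
  from cyclic_vector[OF A nd] obtain z where z: "z \<in> carrier_vec n"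
    and cyc: "\<And>q. q \<noteq> 0 \<Longrightarrow> degree q < n \<Longrightarrow> poly_mat q A *\<^sub>v z \<noteq> 0\<^sub>v n" by blast
  define f where "f i = poly_mat (gp \<mu> i) A *\<^sub>v z" for i
  have f: "f i \<in> carrier_vec n" for i unfolding f_def by (rule pm_vec_carrier[OF A])
  define P where "P = mat n n (\<lambda>(r,i). f i $ r)"
  have P: "P \<in> carrier_mat n n" unfolding P_def by simp
  have fP: "f i = P *\<^sub>v unit_vec n i" if i: "i < n" for i
  proof (rule eq_vecI)
    fix r assume "r < dim_vec (P *\<^sub>v unit_vec n i)"
    hence r: "r < n" using P by simp
    show "f i $ r = (P *\<^sub>v unit_vec n i) $ r" unfolding mat_unit_col[OF P r i] P_def using r i by simp
  qed (use P f in simp)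
  have "det P \<noteq> 0"
  proof
    assume "det P = 0"
    from this[unfolded det_0_iff_vec_prod_zero[OF P]] obtain c where c: "c \<in> carrier_vec n"
      and c0: "c \<noteq> 0\<^sub>v n" and Pc: "P *\<^sub>v c = 0\<^sub>v n" by blast
    define G where "G = (\<Sum>i<n. Polynomial.smult (c $ i) (gp \<mu> i))"
    have "poly_mat G A *\<^sub>v z = 0\<^sub>v n"
    proof (rule eq_vecI)
      fix r assume "r < dim_vec (0\<^sub>v n :: 'a vec)"
      hence r: "r < n" by simp
      have "(poly_mat G A *\<^sub>v z) $ r = (\<Sum>i<n. (poly_mat (Polynomial.smult (c $ i) (gp \<mu> i)) A *\<^sub>v z) $ r)"
        unfolding G_def by (rule pm_vec_sum[OF A z r]) simp
      also have "\<dots> = (\<Sum>i<n. P $$ (r,i) * c $ i)"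
      proof (rule sum.cong[OF refl])
        fix i assume i: "i \<in> {..<n}"
        show "(poly_mat (Polynomial.smult (c $ i) (gp \<mu> i)) A *\<^sub>v z) $ r = P $$ (r,i) * c $ i"
          unfolding pm_vec_smult[OF A z] using i r pm_dim[OF A] unfolding P_def f_def by (simp add: mult.commute)
      qed
      also have "\<dots> = (P *\<^sub>v c) $ r" using r P c by (simp add: scalar_prod_def atLeast0LessThan)
      finally show "(poly_mat G A *\<^sub>v z) $ r = 0\<^sub>v n $ r" unfolding Pc .
    qed (use A in simp)
    moreover have "degree G < n"
    proof -
      from c0 c obtain k where "k < n" by (metis carrier_vecD eq_vecI index_zero_vec(2) less_nat_zero_code)
      hence "degree G \<le> n - 1" unfolding G_def
        by (intro degree_sum_le) (auto intro: order.trans[OF degree_smult_le])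
      thus ?thesis using \<open>k < n\<close> by simp
    qed
    moreover have "G \<noteq> 0"
    proof -
      define I where "I = {i. i < n \<and> c $ i \<noteq> 0}"
      have "I \<noteq> {}" unfolding I_def using c0 c by (metis (mono_tags, lifting) carrier_vecD empty_Collect_eq eq_vecI index_zero_vec(1,2))
      moreover have fI: "finite I" unfolding I_def by simp
      ultimately have i0: "Max I \<in> I" by (rule Max_in[rotated])
      define i0 where "i0 = Max I"
      have i0n: "i0 < n" and ci0: "c $ i0 \<noteq> 0" using i0 unfolding i0_def I_def by auto
      have big: "c $ i = 0" if "i < n" "i0 < i" for i
      proof (rule ccontr)
        assume "c $ i \<noteq> 0" hence "i \<in> I" unfolding I_def using that by simp
        hence "i \<le> i0" unfolding i0_def by (rule Max_ge[OF fI])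
        thus False using that by simp
      qed
      have "coeff G i0 = (\<Sum>i<n. c $ i * coeff (gp \<mu> i) i0)" unfolding G_def coeff_sum by simp
      also have "\<dots> = c $ i0 * coeff (gp \<mu> i0) i0"
      proof (rule sum_single)
        fix i assume i: "i \<in> {..<n}" "i \<noteq> i0"
        show "c $ i * coeff (gp \<mu> i) i0 = 0"
        proof (cases "i < i0")
          case True
          hence "coeff (gp \<mu> i) i0 = 0" using gp_monic[of \<mu> i] by (intro coeff_eq_0) simp
          thus ?thesis by simp
        next
          case False
          hence "c $ i = 0" using big i by simp
          thus ?thesis by simp
        qed
      qed (use i0n in auto)
      also have "\<dots> = c $ i0" using gp_monic[of \<mu> i0] by simp
      finally show ?thesis using ci0 by auto
    qed
    ultimately show False using cyc by blast
  qed
  from det_inv[OF P this] obtain Pi where Pi: "Pi \<in> carrier_mat n n"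
    and PPi: "P * Pi = 1\<^sub>m n" and PiP: "Pi * P = 1\<^sub>m n" by blast
  have Pif: "Pi *\<^sub>v f i = unit_vec n i" if i: "i < n" for i
    unfolding fP[OF i] assoc_mult_mat_vec[OF Pi P unit_vec_carrier, symmetric] PiP by simp
  have Af: "A *\<^sub>v f i = f (Suc i) + \<mu> i \<cdot>\<^sub>v f i" for i
  proof -
    have "f (Suc i) = poly_mat [:- \<mu> i, 1:] A *\<^sub>v f i"
      unfolding f_def gp.simps pm_vec_mult[OF A z] ..
    also have "\<dots> = (- \<mu> i) \<cdot>\<^sub>m 1\<^sub>m n *\<^sub>v f i + A *\<^sub>v f i"
      unfolding pm_lin[OF A] by (rule add_mult_distrib_mat_vec[OF _ A f]) simp
    finally have e: "f (Suc i) = (- \<mu> i) \<cdot>\<^sub>m 1\<^sub>m n *\<^sub>v f i + A *\<^sub>v f i" .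
    show ?thesis
    proof (rule eq_vecI)
      fix r assume "r < dim_vec (f (Suc i) + \<mu> i \<cdot>\<^sub>v f i)"
      hence r: "r < n" using f[of i] by simp
      have "(f (Suc i)) $ r = - \<mu> i * f i $ r + (A *\<^sub>v f i) $ r"
        unfolding e smult_mat_mult_vec[OF one_carrier_mat f] using r A f[of i] by simp
      thus "(A *\<^sub>v f i) $ r = (f (Suc i) + \<mu> i \<cdot>\<^sub>v f i) $ r" using r f[of i] f[of "Suc i"] by simp
    qed (use A f[of "Suc i"] f[of i] in simp)
  qed
  have T: "(Pi * A * P) $$ (r,i) = (if r = i then \<mu> i else if r = Suc i then 1 else 0)"
    if r: "r < n" and i: "Suc i < n" for r i
  proof -
    have i': "i < n" using i by simp
    have PAP: "Pi * A * P \<in> carrier_mat n n" using Pi A P by simp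
    have "(Pi * A * P) $$ (r,i) = (Pi * A * P *\<^sub>v unit_vec n i) $ r"
      using mat_unit_col[OF PAP r i'] by simp
    also have "Pi * A * P *\<^sub>v unit_vec n i = Pi *\<^sub>v (A *\<^sub>v f i)"
      unfolding fP[OF i'] using Pi A P
      by (simp add: assoc_mult_mat_vec[of _ n n _ n])
    also have "\<dots> = Pi *\<^sub>v f (Suc i) + Pi *\<^sub>v (\<mu> i \<cdot>\<^sub>v f i)"
      unfolding Af by (rule mult_add_distrib_mat_vec[OF Pi f]) (use f[of i] in simp)
    also have "\<dots> = unit_vec n (Suc i) + \<mu> i \<cdot>\<^sub>v unit_vec n i"
      unfolding mult_mat_vec[OF Pi f] Pif[OF i] Pif[OF i'] ..
    finally show ?thesis using r i by simp
  qed
  show ?thesis using P Pi PPi PiP T by blast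
qed


lemma sum_two: assumes "finite S" "a \<in> S" "b \<in> S" "a \<noteq> b"
  "\<And>m. m \<in> S \<Longrightarrow> m \<noteq> a \<Longrightarrow> m \<noteq> b \<Longrightarrow> f m = 0"
  shows "sum f S = f a + f b"
proof -
  have "sum f S = f a + sum f (S - {a})" using assms(1,2) by (rule sum.remove)
  also have "sum f (S - {a}) = f b" using assms by (intro sum_single) auto
  finally show ?thesis .
qed

lemma sum_three: assumes "finite S" "a \<in> S" "b \<in> S" "c \<in> S" "a \<noteq> b" "a \<noteq> c" "b \<noteq> c"
  "\<And>m. m \<in> S \<Longrightarrow> m \<noteq> a \<Longrightarrow> m \<noteq> b \<Longrightarrow> m \<noteq> c \<Longrightarrow> f m = 0"
  shows "sum f S = f a + f b + f c"
proof -
  have "sum f S = f a + sum f (S - {a})" using assms(1,2) by (rule sum.remove)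
  also have "sum f (S - {a}) = f b + f c" using assms by (intro sum_two) auto
  finally show ?thesis by (simp add: add.assoc)
qed

lemma fid_a: fixes l d w g :: "'a::field" assumes "l \<noteq> d" "l \<noteq> w"
  shows "w * (g / ((l - d) * (l - w))) + 0 * 1 + g * (1 / (l - d)) = g / ((l - d) * (l - w)) * l"
proof -
  have a: "l - d \<noteq> 0" and b: "l - w \<noteq> 0" using assms by auto
  define X where "X = g / ((l - d) * (l - w))"
  have h: "X * (l - w) = g / (l - d)" unfolding X_def using a b by simp
  have "w * X + g * (1 / (l - d)) = w * X + X * (l - w)" using h by simp
  also have "\<dots> = X * l" by (simp add: algebra_simps)
  finally show ?thesis unfolding X_def by simp
qed

lemma fid_b: fixes l d :: "'a::field" assumes "l \<noteq> d"
  shows "1 * 1 + d * (1 / (l - d)) = 1 / (l - d) * l"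
proof -
  have a: "l - d \<noteq> 0" using assms by auto
  define X where "X = 1 / (l - d)"
  have h: "X * (l - d) = 1" unfolding X_def using a by simp
  have "1 * 1 + d * X = X * (l - d) + d * X" using h by simp
  also have "\<dots> = X * l" by (simp add: algebra_simps)
  finally show ?thesis unfolding X_def .
qed
lemma fid_c: fixes d w g :: "'a::field" assumes "d \<noteq> w"
  shows "w * (g / (d - w)) + g * 1 = g / (d - w) * d"
proof -
  have b: "d - w \<noteq> 0" using assms by auto
  define X where "X = g / (d - w)"
  have h: "X * (d - w) = g" unfolding X_def using b by simp
  have "w * X + g * 1 = w * X + X * (d - w)" using h by simp
  also have "\<dots> = X * d" by (simp add: algebra_simps)
  finally show ?thesis unfolding X_def .
qed

lemma mat_mult_entry: assumes "X \<in> carrier_mat n m" "Y \<in> carrier_mat m k" "i < n" "j < k"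
  shows "(X * Y) $$ (i,j) = (\<Sum>l<m. X $$ (i,l) * Y $$ (l,j))"
  using assms by (simp add: scalar_prod_def atLeast0LessThan)

context
  fixes n :: nat and T :: "'a::field mat" and J :: "nat \<Rightarrow> bool" and w :: 'a
  assumes n2: "2 \<le> n" and T: "T \<in> carrier_mat n n"
  and Tcol: "\<And>r i. r < n \<Longrightarrow> Suc i < n \<Longrightarrow> T $$ (r,i) = (if r = i then T $$ (i,i) else if r = Suc i then 1 else 0)"
  and J_lt: "\<And>k. J k \<Longrightarrow> k + 3 \<le> n"
  and J_next: "\<And>k. J k \<Longrightarrow> \<not> J (Suc k)"
  and nJ_next: "\<And>k. k + 3 \<le> n \<Longrightarrow> \<not> J k \<Longrightarrow> J (Suc k)"
  and J_w: "\<And>k. J k \<Longrightarrow> T $$ (k,k) = w"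
  and nJ_w: "\<And>k. Suc k < n \<Longrightarrow> \<not> J k \<Longrightarrow> T $$ (k,k) \<noteq> w"
  and dw: "T $$ (n-1,n-1) \<noteq> w"
  and dl: "T $$ (n-1,n-1) \<noteq> T $$ (n-2,n-2)"
begin

definition NN where "NN = mat n n (\<lambda>(r,k). if J k \<and> r = Suc k then -1
   else if k = n - 1 \<and> \<not> J r \<and> r \<noteq> n - 1 then - T $$ (r, n - 1) else 0)"

definition QQ where "QQ = mat n n (\<lambda>(r,k).
   if J k then (if r = k then 1 else 0)
   else if k + 2 < n then (if r = k then 1 else if r = Suc k then 1 / (T$$(k,k) - w) else 0)
   else if k = n - 2 then (if r = n - 2 then 1 else if r = n - 1 then 1 / (T$$(n-2,n-2) - T$$(n-1,n-1))
     else if J r then T$$(r,n-1) / ((T$$(n-2,n-2) - T$$(n-1,n-1)) * (T$$(n-2,n-2) - w)) else 0)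
   else (if r = n - 1 then 1 else if J r then T$$(r,n-1) / (T$$(n-1,n-1) - w) else 0))"

definition LL where "LL = mat n n (\<lambda>(i,j). if i = j then T $$ (i,i) else (0::'a))"

lemma NN_carrier: "NN \<in> carrier_mat n n" unfolding NN_def by simp
lemma QQ_carrier: "QQ \<in> carrier_mat n n" unfolding QQ_def by simp
lemma LL_carrier: "LL \<in> carrier_mat n n" unfolding LL_def by simp

lemma J_n2: "\<not> J (n - 2)" using J_lt n2 by force
lemma J_n1: "\<not> J (n - 1)" using J_lt n2 by force

lemma NN_zero: assumes "r < n" "m < n" "\<not> J m" "m \<noteq> n - 1" shows "NN $$ (r,m) = 0"
  using assms unfolding NN_def by simp

lemma NN_sq: "NN * NN = 0\<^sub>m n n"
proof (rule eq_matI)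
  fix r k assume r: "r < dim_row (0\<^sub>m n n :: 'a mat)" and k: "k < dim_col (0\<^sub>m n n :: 'a mat)"
  hence r: "r < n" and k: "k < n" by auto
  have "(NN * NN) $$ (r,k) = (\<Sum>m<n. NN $$ (r,m) * NN $$ (m,k))"
    by (rule mat_mult_entry[OF NN_carrier NN_carrier r k])
  also have "\<dots> = 0"
  proof (rule sum.neutral, intro ballI)
    fix m assume m: "m \<in> {..<n}"
    show "NN $$ (r,m) * NN $$ (m,k) = 0"
    proof (cases "NN $$ (m,k) = 0")
      case False
      hence "(J k \<and> m = Suc k) \<or> (k = n - 1 \<and> \<not> J m \<and> m \<noteq> n - 1)"
        using m k unfolding NN_def by (auto split: if_splits)
      hence "\<not> J m \<and> m \<noteq> n - 1" using J_next J_lt by force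
      thus ?thesis using NN_zero[OF r] m by simp
    qed simp
  qed
  finally show "(NN * NN) $$ (r,k) = 0\<^sub>m n n $$ (r,k)" using r k by simp
qed (auto simp: NN_def)

definition DD where "DD = T + NN"

lemma DD_carrier: "DD \<in> carrier_mat n n" unfolding DD_def using T NN_carrier by simp

lemma DD_J: assumes r: "r < n" and k: "J k" shows "DD $$ (r,k) = (if r = k then w else 0)"
proof -
  have k': "Suc k < n" "k \<noteq> n - 1" using J_lt[OF k] by auto
  have "DD $$ (r,k) = T $$ (r,k) + NN $$ (r,k)" unfolding DD_def using r k' T NN_carrier by simp
  thus ?thesis unfolding Tcol[OF r k'(1)] NN_def using r k' k J_w[OF k] by auto
qed

lemma DD_P: assumes r: "r < n" and k: "\<not> J k" "Suc k < n"
  shows "DD $$ (r,k) = (if r = k then T $$ (k,k) else if r = Suc k then 1 else 0)"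
proof -
  have k': "k \<noteq> n - 1" using k by auto
  have "DD $$ (r,k) = T $$ (r,k) + NN $$ (r,k)" unfolding DD_def using r k T NN_carrier by simp
  thus ?thesis unfolding Tcol[OF r k(2)] NN_def using r k' k by auto
qed

lemma DD_L: assumes r: "r < n"
  shows "DD $$ (r,n-1) = (if J r \<or> r = n - 1 then T $$ (r,n-1) else 0)"
proof -
  have n1: "n - 1 < n" using n2 by simp
  have "DD $$ (r,n-1) = T $$ (r,n-1) + NN $$ (r,n-1)" unfolding DD_def using r n1 T NN_carrier by simp
  thus ?thesis unfolding NN_def using r n1 J_n1 by auto
qed

lemma QQ_J: assumes m: "m < n" and k: "J k" shows "QQ $$ (m,k) = (if m = k then 1 else 0)"
  using J_lt[OF k] m k unfolding QQ_def by simp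

lemma QQ_P: assumes m: "m < n" and k: "\<not> J k" "k + 2 < n"
  shows "QQ $$ (m,k) = (if m = k then 1 else if m = Suc k then 1 / (T$$(k,k) - w) else 0)"
  using m k unfolding QQ_def by simp

lemma QQ_n2: assumes m: "m < n"
  shows "QQ $$ (m,n-2) = (if m = n - 2 then 1 else if m = n - 1 then 1 / (T$$(n-2,n-2) - T$$(n-1,n-1))
     else if J m then T$$(m,n-1) / ((T$$(n-2,n-2) - T$$(n-1,n-1)) * (T$$(n-2,n-2) - w)) else 0)"
  using m n2 J_n2 unfolding QQ_def by simp

lemma QQ_n1: assumes m: "m < n"
  shows "QQ $$ (m,n-1) = (if m = n - 1 then 1 else if J m then T$$(m,n-1) / (T$$(n-1,n-1) - w) else 0)"
proof -
  have "n - 1 \<noteq> n - 2" "\<not> n - 1 + 2 < n" "n - 1 < n" using n2 by arith+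
  thus ?thesis using m J_n1 unfolding QQ_def by simp
qed

lemma LL_entry: assumes "i < n" "j < n" shows "LL $$ (i,j) = (if i = j then T $$ (i,i) else 0)"
  using assms unfolding LL_def by simp

lemma QL: assumes r: "r < n" and k: "k < n" shows "(QQ * LL) $$ (r,k) = QQ $$ (r,k) * T $$ (k,k)"
proof -
  have "(QQ * LL) $$ (r,k) = (\<Sum>m<n. QQ $$ (r,m) * LL $$ (m,k))"
    by (rule mat_mult_entry[OF QQ_carrier LL_carrier r k])
  also have "\<dots> = QQ $$ (r,k) * LL $$ (k,k)" by (rule sum_single) (use k LL_entry[OF _ k] in auto)
  finally show ?thesis using LL_entry[OF k k] by simp
qed

lemma DQ_J: assumes r: "r < n" and k: "J k"
  shows "(\<Sum>m<n. DD $$ (r,m) * QQ $$ (m,k)) = QQ $$ (r,k) * T $$ (k,k)"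
proof -
  have kn: "k < n" using J_lt[OF k] by simp
  have "(\<Sum>m<n. DD $$ (r,m) * QQ $$ (m,k)) = DD $$ (r,k) * QQ $$ (k,k)"
    by (rule sum_single) (use kn QQ_J[OF _ k] in auto)
  thus ?thesis using DD_J[OF r k] QQ_J[OF kn k] QQ_J[OF r k] J_w[OF k] by simp
qed

lemma DQ_P: assumes r: "r < n" and k: "\<not> J k" "k + 2 < n"
  shows "(\<Sum>m<n. DD $$ (r,m) * QQ $$ (m,k)) = QQ $$ (r,k) * T $$ (k,k)"
proof -
  have Jk1: "J (Suc k)" using nJ_next[OF _ k(1)] k(2) by simp
  have mw: "T $$ (k,k) - w \<noteq> 0" using nJ_w[OF _ k(1)] k(2) by simp
  have sk: "Suc k < n" using k(2) by simp
  have "(\<Sum>m<n. DD $$ (r,m) * QQ $$ (m,k)) = DD $$ (r,k) * QQ $$ (k,k) + DD $$ (r,Suc k) * QQ $$ (Suc k,k)"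
    by (rule sum_two) (use k QQ_P[OF _ k] in auto)
  also have "\<dots> = DD $$ (r,k) + DD $$ (r,Suc k) / (T $$ (k,k) - w)"
    using QQ_P[OF _ k, of k] QQ_P[OF _ k, of "Suc k"] k by simp
  also have "\<dots> = QQ $$ (r,k) * T $$ (k,k)"
    unfolding DD_P[OF r k(1) sk] DD_J[OF r Jk1] QQ_P[OF r k] using k(2) mw
    by (auto simp: field_simps)
  finally show ?thesis .
qed

lemma DQ_n2: assumes r: "r < n"
  shows "(\<Sum>m<n. DD $$ (r,m) * QQ $$ (m,n-2)) = QQ $$ (r,n-2) * T $$ (n-2,n-2)"
proof -
  have nn: "n - 2 < n" "n - 1 < n" "n - 2 \<noteq> n - 1" "Suc (n - 2) < n" "Suc (n - 2) = n - 1" using n2 by arith+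
  have ld: "T $$ (n-2,n-2) - T $$ (n-1,n-1) \<noteq> 0" using dl by simp
  have lw: "T $$ (n-2,n-2) - w \<noteq> 0" using nJ_w[OF nn(4) J_n2] by simp
  have D2: "DD $$ (r,n-2) = (if r = n - 2 then T $$ (n-2,n-2) else if r = n - 1 then 1 else 0)"
    using DD_P[OF r J_n2 nn(4)] nn(5) by simp
  show ?thesis
  proof (cases "J r")
    case True
    have rr: "r \<noteq> n - 2" "r \<noteq> n - 1" using J_lt[OF True] by auto
    have "(\<Sum>m<n. DD $$ (r,m) * QQ $$ (m,n-2)) = DD $$ (r,r) * QQ $$ (r,n-2) + DD $$ (r,n-2) * QQ $$ (n-2,n-2)
       + DD $$ (r,n-1) * QQ $$ (n-1,n-2)"
    proof (rule sum_three)
      fix m assume m: "m \<in> {..<n}" "m \<noteq> r" "m \<noteq> n - 2" "m \<noteq> n - 1"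
      show "DD $$ (r,m) * QQ $$ (m,n-2) = 0"
      proof (cases "J m")
        case True thus ?thesis using DD_J[OF r True] m by simp
      next
        case False thus ?thesis using QQ_n2[of m] m by simp
      qed
    qed (use r rr nn in auto)
    also have "\<dots> = QQ $$ (r,n-2) * T $$ (n-2,n-2)"
    proof -
      have e: "DD $$ (r,r) = w" "QQ $$ (r,n-2) = T$$(r,n-1) / ((T$$(n-2,n-2) - T$$(n-1,n-1)) * (T$$(n-2,n-2) - w))"
        "DD $$ (r,n-2) = 0" "QQ $$ (n-2,n-2) = 1" "DD $$ (r,n-1) = T $$ (r,n-1)"
        "QQ $$ (n-1,n-2) = 1 / (T$$(n-2,n-2) - T$$(n-1,n-1))"
        using DD_J[OF r True] D2 DD_L[OF r] QQ_n2[OF r] QQ_n2[OF nn(1)] QQ_n2[OF nn(2)] rr nn True by auto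
      show ?thesis unfolding e by (rule fid_a) (use dl nJ_w[OF nn(4) J_n2] in auto)
    qed
    finally show ?thesis .
  next
    case False
    have "(\<Sum>m<n. DD $$ (r,m) * QQ $$ (m,n-2)) = DD $$ (r,n-2) * QQ $$ (n-2,n-2)
       + DD $$ (r,n-1) * QQ $$ (n-1,n-2)"
    proof (rule sum_two)
      fix m assume m: "m \<in> {..<n}" "m \<noteq> n - 2" "m \<noteq> n - 1"
      show "DD $$ (r,m) * QQ $$ (m,n-2) = 0"
      proof (cases "J m")
        case True
        hence "r \<noteq> m" using False by auto
        thus ?thesis using DD_J[OF r True] by simp
      next
        case False thus ?thesis using QQ_n2[of m] m by simp
      qed
    qed (use nn in auto)
    also have "\<dots> = QQ $$ (r,n-2) * T $$ (n-2,n-2)"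
    proof -
      consider "r = n - 2" | "r = n - 1" | "r \<noteq> n - 2" "r \<noteq> n - 1" by blast
      thus ?thesis
      proof cases
        case 1 thus ?thesis unfolding D2 DD_L[OF r] QQ_n2[OF r] QQ_n2[OF nn(1)] QQ_n2[OF nn(2)]
          using nn False by auto
      next
        case 2
        have e: "DD $$ (r,n-2) = 1" "QQ $$ (n-2,n-2) = 1" "DD $$ (r,n-1) = T $$ (n-1,n-1)"
          "QQ $$ (n-1,n-2) = 1 / (T$$(n-2,n-2) - T$$(n-1,n-1))"
          "QQ $$ (r,n-2) = 1 / (T$$(n-2,n-2) - T$$(n-1,n-1))"
          using D2 DD_L[OF r] QQ_n2[OF r] QQ_n2[OF nn(1)] QQ_n2[OF nn(2)] nn 2 by auto
        show ?thesis unfolding e by (rule fid_b) (use dl in auto)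
      next
        case 3 thus ?thesis unfolding D2 DD_L[OF r] QQ_n2[OF r] QQ_n2[OF nn(1)] QQ_n2[OF nn(2)]
          using nn False by auto
      qed
    qed
    finally show ?thesis .
  qed
qed

lemma DQ_n1: assumes r: "r < n"
  shows "(\<Sum>m<n. DD $$ (r,m) * QQ $$ (m,n-1)) = QQ $$ (r,n-1) * T $$ (n-1,n-1)"
proof -
  have nn: "n - 1 < n" using n2 by arith
  have dw': "T $$ (n-1,n-1) - w \<noteq> 0" using dw by simp
  show ?thesis
  proof (cases "J r")
    case True
    have rr: "r \<noteq> n - 1" using J_lt[OF True] by auto
    have "(\<Sum>m<n. DD $$ (r,m) * QQ $$ (m,n-1)) = DD $$ (r,r) * QQ $$ (r,n-1) + DD $$ (r,n-1) * QQ $$ (n-1,n-1)"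
    proof (rule sum_two)
      fix m assume m: "m \<in> {..<n}" "m \<noteq> r" "m \<noteq> n - 1"
      show "DD $$ (r,m) * QQ $$ (m,n-1) = 0"
      proof (cases "J m")
        case True thus ?thesis using DD_J[OF r True] m by simp
      next
        case False thus ?thesis using QQ_n1[of m] m by simp
      qed
    qed (use r rr nn in auto)
    also have "\<dots> = QQ $$ (r,n-1) * T $$ (n-1,n-1)"
    proof -
      have e: "DD $$ (r,r) = w" "QQ $$ (r,n-1) = T$$(r,n-1) / (T$$(n-1,n-1) - w)"
        "DD $$ (r,n-1) = T $$ (r,n-1)" "QQ $$ (n-1,n-1) = 1"
        using DD_J[OF r True] DD_L[OF r] QQ_n1[OF r] QQ_n1[OF nn] rr True by auto
      show ?thesis unfolding e by (rule fid_c[OF dw])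
    qed
    finally show ?thesis .
  next
    case False
    have "(\<Sum>m<n. DD $$ (r,m) * QQ $$ (m,n-1)) = DD $$ (r,n-1) * QQ $$ (n-1,n-1)"
    proof (rule sum_single)
      fix m assume m: "m \<in> {..<n}" "m \<noteq> n - 1"
      show "DD $$ (r,m) * QQ $$ (m,n-1) = 0"
      proof (cases "J m")
        case True
        hence "r \<noteq> m" using False by auto
        thus ?thesis using DD_J[OF r True] by simp
      next
        case False thus ?thesis using QQ_n1[of m] m by simp
      qed
    qed (use nn in auto)
    also have "\<dots> = QQ $$ (r,n-1) * T $$ (n-1,n-1)"
      unfolding DD_L[OF r] QQ_n1[OF r] QQ_n1[OF nn] using False by auto
    finally show ?thesis .
  qed
qed

lemma DQ: "DD * QQ = QQ * LL"
proof (rule eq_matI)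
  fix r k assume "r < dim_row (QQ * LL)" "k < dim_col (QQ * LL)"
  hence r: "r < n" and k: "k < n" using QQ_carrier LL_carrier by auto
  have "(DD * QQ) $$ (r,k) = (\<Sum>m<n. DD $$ (r,m) * QQ $$ (m,k))"
    by (rule mat_mult_entry[OF DD_carrier QQ_carrier r k])
  also have "\<dots> = QQ $$ (r,k) * T $$ (k,k)"
  proof -
    consider "J k" | "\<not> J k" "k + 2 < n" | "k = n - 2" | "k = n - 1" using k by linarith
    thus ?thesis
    proof cases
      case 1 thus ?thesis by (rule DQ_J[OF r])
    next
      case 2 thus ?thesis by (rule DQ_P[OF r])
    next
      case 3 thus ?thesis using DQ_n2[OF r] by simp
    next
      case 4 thus ?thesis using DQ_n1[OF r] by simp
    qed
  qed
  also have "\<dots> = (QQ * LL) $$ (r,k)" using QL[OF r k] by simp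
  finally show "(DD * QQ) $$ (r,k) = (QQ * LL) $$ (r,k)" .
qed (use DD_carrier QQ_carrier LL_carrier in auto)

lemma QQ_row_nJ: assumes r: "r < n - 1" "\<not> J r" and m: "m < n"
  shows "QQ $$ (r,m) = (if m = r then 1 else 0)"
proof -
  have rn: "r < n" using r by simp
  consider "J m" | "\<not> J m" "m + 2 < n" | "m = n - 2" | "m = n - 1" using m by linarith
  thus ?thesis
  proof cases
    case 1 thus ?thesis using QQ_J[OF rn 1] r by auto
  next
    case 2
    have "J (Suc m)" using nJ_next[OF _ 2(1)] 2(2) by simp
    hence "r \<noteq> Suc m" using r by auto
    thus ?thesis using QQ_P[OF rn 2] by auto
  next
    case 3 thus ?thesis using QQ_n2[OF rn] r by auto
  next
    case 4 thus ?thesis using QQ_n1[OF rn] r by auto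
  qed
qed

lemma QQ_row_L: assumes m: "m < n"
  shows "QQ $$ (n-1,m) = (if m = n - 1 then 1 else if m = n - 2 then 1 / (T$$(n-2,n-2) - T$$(n-1,n-1)) else 0)"
proof -
  have nn: "n - 1 < n" "n - 2 \<noteq> n - 1" using n2 by arith+
  consider "J m" | "\<not> J m" "m + 2 < n" | "m = n - 2" | "m = n - 1" using m by linarith
  thus ?thesis
  proof cases
    case 1 thus ?thesis using QQ_J[OF nn(1) 1] J_lt[OF 1] by auto
  next
    case 2 thus ?thesis using QQ_P[OF nn(1) 2] by auto
  next
    case 3 thus ?thesis using QQ_n2[OF nn(1)] nn by auto
  next
    case 4 thus ?thesis using QQ_n1[OF nn(1)] by auto
  qed
qed

lemma QQ_det: "det QQ \<noteq> 0"
proof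
  assume "det QQ = 0"
  from this[unfolded det_0_iff_vec_prod_zero[OF QQ_carrier]] obtain z where z: "z \<in> carrier_vec n"
    and z0: "z \<noteq> 0\<^sub>v n" and Qz: "QQ *\<^sub>v z = 0\<^sub>v n" by blast
  have row: "(\<Sum>m<n. QQ $$ (r,m) * z $ m) = 0" if r: "r < n" for r
  proof -
    have "(QQ *\<^sub>v z) $ r = 0" using Qz r by simp
    thus ?thesis using r z QQ_carrier by (simp add: scalar_prod_def atLeast0LessThan)
  qed
  have s1: "z $ r = 0" if r: "r < n - 1" "\<not> J r" for r
  proof -
    have rn: "r < n" using r by simp
    have "(\<Sum>m<n. QQ $$ (r,m) * z $ m) = QQ $$ (r,r) * z $ r"
      by (rule sum_single) (use rn QQ_row_nJ[OF r] in auto)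
    thus ?thesis using row[OF rn] QQ_row_nJ[OF r rn] by simp
  qed
  have nn: "n - 1 < n" "n - 2 < n - 1" using n2 by arith+
  have s2: "z $ (n - 1) = 0"
  proof -
    have "(\<Sum>m<n. QQ $$ (n-1,m) * z $ m) = QQ $$ (n-1,n-1) * z $ (n-1)"
    proof (rule sum_single)
      fix m assume m: "m \<in> {..<n}" "m \<noteq> n - 1"
      show "QQ $$ (n-1,m) * z $ m = 0"
        using QQ_row_L[of m] s1[OF nn(2) J_n2] m by auto
    qed (use nn in auto)
    thus ?thesis using row[OF nn(1)] QQ_row_L[OF nn(1)] by simp
  qed
  have nJz: "z $ m = 0" if "m < n" "\<not> J m" for m
  proof (cases "m = n - 1")
    case True thus ?thesis using s2 by simp
  next
    case False thus ?thesis using s1 that by simp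
  qed
  have s3: "z $ r = 0" if r: "J r" for r
  proof -
    have rn: "r < n" using J_lt[OF r] by simp
    have "(\<Sum>m<n. QQ $$ (r,m) * z $ m) = QQ $$ (r,r) * z $ r"
    proof (rule sum_single)
      fix m assume m: "m \<in> {..<n}" "m \<noteq> r"
      show "QQ $$ (r,m) * z $ m = 0"
      proof (cases "J m")
        case True thus ?thesis using QQ_J[OF rn True] m by simp
      next
        case False thus ?thesis using nJz m by simp
      qed
    qed (use rn in auto)
    thus ?thesis using row[OF rn] QQ_J[OF rn r] by simp
  qed
  have "z = 0\<^sub>v n"
  proof (rule eq_vecI)
    fix i assume "i < dim_vec (0\<^sub>v n :: 'a vec)"
    hence i: "i < n" by simp
    show "z $ i = 0\<^sub>v n $ i" using i nJz s3 by (cases "J i") auto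
  qed (use z in simp)
  thus False using z0 by simp
qed

lemma frame_main: "\<exists>N Q Qi. N \<in> carrier_mat n n \<and> Q \<in> carrier_mat n n \<and> Qi \<in> carrier_mat n n \<and>
   N * N = 0\<^sub>m n n \<and> Q * Qi = 1\<^sub>m n \<and> Qi * Q = 1\<^sub>m n \<and> T + N = Q * LL * Qi"
proof -
  from det_inv[OF QQ_carrier QQ_det] obtain Qi where Qi: "Qi \<in> carrier_mat n n"
    and QQi: "QQ * Qi = 1\<^sub>m n" and QiQ: "Qi * QQ = 1\<^sub>m n" by blast
  have "DD = DD * (QQ * Qi)" unfolding QQi using DD_carrier by simp
  also have "\<dots> = (DD * QQ) * Qi" using DD_carrier QQ_carrier Qi by (simp add: assoc_mult_mat)
  also have "\<dots> = QQ * LL * Qi" unfolding DQ ..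
  finally have "T + NN = QQ * LL * Qi" unfolding DD_def .
  thus ?thesis using NN_carrier QQ_carrier Qi NN_sq QQi QiQ by blast
qed

end


lemma trace_comm: assumes X: "(X :: 'a :: comm_ring_1 mat) \<in> carrier_mat n m" and Y: "Y \<in> carrier_mat m n"
  shows "mat_trace (X * Y) = mat_trace (Y * X)"
proof -
  have "mat_trace (X * Y) = (\<Sum>i<n. \<Sum>k<m. X $$ (i,k) * Y $$ (k,i))"
    unfolding mat_trace_def using X Y by (intro sum.cong) (auto simp: scalar_prod_def atLeast0LessThan)
  also have "\<dots> = (\<Sum>k<m. \<Sum>i<n. Y $$ (k,i) * X $$ (i,k))"
    by (subst sum.swap) (simp add: mult.commute)
  also have "\<dots> = mat_trace (Y * X)"
    unfolding mat_trace_def using X Y by (intro sum.cong) (auto simp: scalar_prod_def atLeast0LessThan)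
  finally show ?thesis .
qed

definition hh :: "'a::field \<Rightarrow> 'a \<Rightarrow> 'a \<Rightarrow> nat \<Rightarrow> 'a" where
  "hh l w x d = (if d = 2 then l else if odd d then w else if d = 4 then x else - w)"

lemma hh_sum_range: assumes "2 \<le> N"
  shows "(\<Sum>d\<in>{2..N}. hh l w x d) = l + (if odd N then w else 0) + (if 4 \<le> N then x + w else 0)"
  using assms
proof (induct N rule: dec_induct)
  case base thus ?case by (simp add: hh_def)
next
  case (step N)
  have "(\<Sum>d\<in>{2..Suc N}. hh l w x d) = (\<Sum>d\<in>{2..N}. hh l w x d) + hh l w x (Suc N)"
    using step(1) by (simp add: sum.cl_ivl_Suc)
  also have "\<dots> = l + (if odd N then w else 0) + (if 4 \<le> N then x + w else 0) + hh l w x (Suc N)"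
    unfolding step(3) ..
  also have "\<dots> = l + (if odd (Suc N) then w else 0) + (if 4 \<le> Suc N then x + w else 0)"
  proof -
    consider "N = 2" | "N = 3" | "4 \<le> N" using step(1) by linarith
    thus ?thesis
    proof cases
      case 1 thus ?thesis by (simp add: hh_def)
    next
      case 2 thus ?thesis by (simp add: hh_def)
    next
      case 3 thus ?thesis by (cases "odd N") (auto simp: hh_def)
    qed
  qed
  finally show ?case .
qed

lemma hh_sum: assumes n: "4 \<le> n"
  shows "(\<Sum>k<n - 1. hh l w x (n - k)) = l + (if odd n then w else 0) + (x + w)"
proof -
  have "(\<Sum>k<n - 1. hh l w x (n - k)) = (\<Sum>d\<in>{2..n}. hh l w x d)"
    by (rule sum.reindex_bij_witness[of _ "\<lambda>d. n - d" "\<lambda>k. n - k"]) (use n in auto)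
  also have "\<dots> = l + (if odd n then w else 0) + (x + w)" using hh_sum_range[of n l w x] n by simp
  finally show ?thesis .
qed

lemma hh_set: assumes n: "4 \<le> n"
  shows "{hh l w x (n - k) | k. k < n - 1} = {l, w, x} \<union> (if 6 \<le> n then {- w} else {})"
proof
  show "{hh l w x (n - k) | k. k < n - 1} \<subseteq> {l, w, x} \<union> (if 6 \<le> n then {- w} else {})"
  proof
    fix y assume "y \<in> {hh l w x (n - k) | k. k < n - 1}"
    then obtain k where k: "k < n - 1" and y: "y = hh l w x (n - k)" by blast
    show "y \<in> {l, w, x} \<union> (if 6 \<le> n then {- w} else {})"
    proof (cases "n - k = 2 \<or> odd (n - k) \<or> n - k = 4")
      case True thus ?thesis unfolding y hh_def by auto
    next
      case False
      hence "6 \<le> n - k" using k by presburger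
      thus ?thesis unfolding y hh_def using False by auto
    qed
  qed
  show "{l, w, x} \<union> (if 6 \<le> n then {- w} else {}) \<subseteq> {hh l w x (n - k) | k. k < n - 1}"
  proof -
    have "hh l w x (n - (n - 2)) = l" "hh l w x (n - (n - 3)) = w" "hh l w x (n - (n - 4)) = x"
      using n by (auto simp: hh_def)
    moreover have "n - 2 < n - 1" "n - 3 < n - 1" "n - 4 < n - 1" using n by auto
    moreover have "6 \<le> n \<Longrightarrow> hh l w x (n - (n - 6)) = - w \<and> n - 6 < n - 1" by (auto simp: hh_def)
    ultimately have a: "l \<in> {hh l w x (n - k) | k. k < n - 1}" "w \<in> {hh l w x (n - k) | k. k < n - 1}"
      "x \<in> {hh l w x (n - k) | k. k < n - 1}"
      "6 \<le> n \<Longrightarrow> - w \<in> {hh l w x (n - k) | k. k < n - 1}"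
      by (metis (mono_tags, lifting) mem_Collect_eq)+
    show ?thesis using a by (cases "6 \<le> n") auto
  qed
qed

lemma diag_eigen:
  fixes X :: "'a :: field mat"
  assumes X: "X \<in> carrier_mat n n" and U: "U \<in> carrier_mat n n" and V: "V \<in> carrier_mat n n"
    and UV: "U * V = 1\<^sub>m n" and VU: "V * U = 1\<^sub>m n"
    and L: "L = mat n n (\<lambda>(i,j). if i = j then f i else 0)"
    and XL: "X = U * L * V"
  shows "diagonalizable X" "{k. eigenvalue X k} = f ` {..<n}"
proof -
  have Lc: "L \<in> carrier_mat n n" unfolding L by simp
  have "V * X * U = (V * U) * L * (V * U)"
    unfolding XL using U V Lc by (simp add: assoc_mult_mat[of _ n n _ n _ n])
  also have "\<dots> = L" unfolding VU using Lc by simp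
  finally have VXU: "V * X * U = L" .
  have dL: "diagonal_mat L" unfolding diagonal_mat_def L by simp
  have dd: "diagonal_mat (V * X * U)" using dL VXU by simp
  show "diagonalizable X" unfolding diagonalizable_def carrier_matD(1)[OF X]
    by (intro conjI X exI[of _ U] exI[of _ V] U V UV VU dd)
  have sim: "similar_mat X L" unfolding similar_mat_def
    by (rule exI[of _ U], rule exI[of _ V], unfold similar_mat_wit_def Let_def) (use X U V Lc UV VU XL in auto)
  have ut: "upper_triangular L" unfolding upper_triangular_def L by simp
  have dm: "diag_mat L = map f [0..<n]" unfolding diag_mat_def L by (auto intro: nth_equalityI)
  show "{k. eigenvalue X k} = f ` {..<n}"
  proof (rule Set.set_eqI)
    fix k
    have "eigenvalue X k \<longleftrightarrow> poly (char_poly L) k = 0"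
      unfolding eigenvalue_root_char_poly[OF X] char_poly_similar[OF sim] ..
    also have "\<dots> \<longleftrightarrow> k \<in> f ` {..<n}"
      unfolding char_poly_upper_triangular[OF Lc ut] dm poly_prod_list_zero_iff by auto
    finally show "k \<in> {k. eigenvalue X k} \<longleftrightarrow> k \<in> f ` {..<n}" by simp
  qed
qed

theorem generic:
  fixes A :: "'a :: field mat"
  assumes A: "A \<in> carrier_mat n n" and nd: "non_derogatory A" and n4: "4 \<le> n"
    and ww: "- w \<noteq> w" and lw: "l \<noteq> w" and xw: "x \<noteq> w"
    and dw: "mat_trace A - (l + (if odd n then w else 0) + (x + w)) \<noteq> w"
    and dl: "mat_trace A - (l + (if odd n then w else 0) + (x + w)) \<noteq> l"
  shows "\<exists>M \<in> carrier_mat n n. M * M = 0\<^sub>m n n \<and> diagonalizable (A + M) \<and>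
     {k. eigenvalue (A + M) k} = insert (mat_trace A - (l + (if odd n then w else 0) + (x + w)))
        {hh l w x (n - k) | k. k < n - 1}"
proof -
  define \<delta> where "\<delta> = mat_trace A - (l + (if odd n then w else 0) + (x + w))"
  define \<mu> where "\<mu> k = hh l w x (n - k)" for k
  from newton_basis[OF A nd, of \<mu>] obtain P Pi where P: "P \<in> carrier_mat n n" and Pi: "Pi \<in> carrier_mat n n"
    and PPi: "P * Pi = 1\<^sub>m n" and PiP: "Pi * P = 1\<^sub>m n"
    and Tc: "\<And>r i. r < n \<Longrightarrow> Suc i < n \<Longrightarrow> (Pi * A * P) $$ (r,i) = (if r = i then \<mu> i else if r = Suc i then 1 else 0)"
    by blast
  define T where "T = Pi * A * P"
  have T: "T \<in> carrier_mat n n" unfolding T_def using Pi A P by simp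
  have Tdiag: "T $$ (i,i) = \<mu> i" if "Suc i < n" for i using Tc[of i i] that unfolding T_def by simp
  have Tcol: "T $$ (r,i) = (if r = i then T $$ (i,i) else if r = Suc i then 1 else 0)"
    if "r < n" "Suc i < n" for r i using Tc[OF that] Tdiag[OF that(2)] unfolding T_def by simp
  have trA: "mat_trace T = mat_trace A"
  proof -
    have PiA: "Pi * A \<in> carrier_mat n n" using Pi A by simp
    have "mat_trace T = mat_trace (P * (Pi * A))" unfolding T_def by (rule trace_comm[OF PiA P])
    also have "P * (Pi * A) = (P * Pi) * A" using P Pi A by (simp add: assoc_mult_mat[of _ n n _ n _ n])
    also have "\<dots> = A" unfolding PPi using A by simp
    finally show ?thesis .
  qed
  have nn: "n = Suc (n - 1)" using n4 by simp
  have "mat_trace T = (\<Sum>k<n - 1. T $$ (k,k)) + T $$ (n-1,n-1)"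
    unfolding mat_trace_def carrier_matD(1)[OF T] by (subst nn) (simp add: lessThan_Suc)
  also have "(\<Sum>k<n - 1. T $$ (k,k)) = (\<Sum>k<n - 1. \<mu> k)" by (rule sum.cong) (auto simp: Tdiag)
  also have "\<dots> = l + (if odd n then w else 0) + (x + w)" unfolding \<mu>_def by (rule hh_sum[OF n4])
  finally have Tlast: "T $$ (n-1,n-1) = \<delta>" unfolding \<delta>_def trA by (simp add: algebra_simps)
  define J where "J k \<longleftrightarrow> k + 3 \<le> n \<and> odd (n - k)" for k
  have n2: "2 \<le> n" using n4 by simp
  have J_lt: "\<And>k. J k \<Longrightarrow> k + 3 \<le> n" unfolding J_def by simp
  have J_next: "\<And>k. J k \<Longrightarrow> \<not> J (Suc k)" unfolding J_def by presburger
  have nJ_next: "\<And>k. k + 3 \<le> n \<Longrightarrow> \<not> J k \<Longrightarrow> J (Suc k)" unfolding J_def by presburger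
  have J_w: "T $$ (k,k) = w" if "J k" for k
  proof -
    have "Suc k < n" "n - k \<noteq> 2" "odd (n - k)" using that unfolding J_def by auto
    thus ?thesis using Tdiag unfolding \<mu>_def hh_def by simp
  qed
  have nJ_w: "T $$ (k,k) \<noteq> w" if "Suc k < n" "\<not> J k" for k
  proof -
    have eq: "T $$ (k,k) = hh l w x (n - k)" using Tdiag[OF that(1)] unfolding \<mu>_def .
    show ?thesis
    proof (cases "n - k = 2")
      case True thus ?thesis using eq lw by (simp add: hh_def)
    next
      case False
      hence "even (n - k)" using that unfolding J_def by presburger
      thus ?thesis using eq xw ww False by (auto simp: hh_def)
    qed
  qed
  have Tn2: "T $$ (n-2,n-2) = l"
  proof -
    have "Suc (n - 2) < n" "n - (n - 2) = 2" using n4 by auto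
    thus ?thesis using Tdiag unfolding \<mu>_def hh_def by simp
  qed
  have dw': "T $$ (n-1,n-1) \<noteq> w" using dw unfolding Tlast \<delta>_def .
  have dl': "T $$ (n-1,n-1) \<noteq> T $$ (n-2,n-2)" using dl unfolding Tlast Tn2 \<delta>_def .
  note fr = n2 T Tcol J_lt J_next nJ_next J_w nJ_w dw' dl'
  from frame_main[of n T J w, OF fr] obtain N Q Qi where N: "N \<in> carrier_mat n n" and Q: "Q \<in> carrier_mat n n"
    and Qi: "Qi \<in> carrier_mat n n" and NN: "N * N = 0\<^sub>m n n" and QQi: "Q * Qi = 1\<^sub>m n" and QiQ: "Qi * Q = 1\<^sub>m n"
    and TN: "T + N = Q * LL n T * Qi" by blast
  define Lm where "Lm = mat n n (\<lambda>(i,j). if i = j then T $$ (i,i) else 0)"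
  have LL: "LL n T = Lm" unfolding Lm_def by (rule LL_def[of n T J w, OF fr])
  have Lm: "Lm \<in> carrier_mat n n" unfolding Lm_def by simp
  define M where "M = P * N * Pi"
  have M: "M \<in> carrier_mat n n" unfolding M_def using P N Pi by simp
  have MM: "M * M = 0\<^sub>m n n"
  proof -
    have "M * M = P * (N * (Pi * P) * N) * Pi" unfolding M_def using P N Pi
      by (simp add: assoc_mult_mat[of _ n n _ n _ n])
    also have "\<dots> = P * (N * N) * Pi" unfolding PiP using N by simp
    also have "\<dots> = 0\<^sub>m n n" unfolding NN using P Pi by simp
    finally show ?thesis .
  qed
  have AT: "A = P * T * Pi"
  proof -
    have "P * T * Pi = (P * Pi) * A * (P * Pi)" unfolding T_def using P Pi A
      by (simp add: assoc_mult_mat[of _ n n _ n _ n])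
    thus ?thesis unfolding PPi using A by simp
  qed
  define U where "U = P * Q"
  define V where "V = Qi * Pi"
  have U: "U \<in> carrier_mat n n" unfolding U_def using P Q by simp
  have V: "V \<in> carrier_mat n n" unfolding V_def using Qi Pi by simp
  have UV: "U * V = 1\<^sub>m n"
  proof -
    have "U * V = P * (Q * Qi) * Pi" unfolding U_def V_def using P Q Qi Pi
      by (simp add: assoc_mult_mat[of _ n n _ n _ n])
    thus ?thesis unfolding QQi using P Pi PPi by simp
  qed
  have VU: "V * U = 1\<^sub>m n"
  proof -
    have "V * U = Qi * (Pi * P) * Q" unfolding U_def V_def using P Q Qi Pi
      by (simp add: assoc_mult_mat[of _ n n _ n _ n])
    thus ?thesis unfolding PiP using Q Qi QiQ by simp
  qed
  have XL: "A + M = U * Lm * V"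
  proof -
    have "A + M = P * T * Pi + P * N * Pi" unfolding M_def AT[symmetric] ..
    also have "\<dots> = P * (T + N) * Pi"
      unfolding mult_add_distrib_mat[OF P T N] add_mult_distrib_mat[OF mult_carrier_mat[OF P T] mult_carrier_mat[OF P N] Pi] ..
    also have "\<dots> = P * (Q * Lm * Qi) * Pi" unfolding TN LL ..
    also have "\<dots> = U * Lm * V" unfolding U_def V_def using P Q Lm Qi Pi
      by (simp add: assoc_mult_mat[of _ n n _ n _ n])
    finally show ?thesis .
  qed
  have AM: "A + M \<in> carrier_mat n n" using A M by simp
  note de = diag_eigen[OF AM U V UV VU Lm_def XL]
  have img: "(\<lambda>i. T $$ (i,i)) ` {..<n} = insert \<delta> {hh l w x (n - k) | k. k < n - 1}"
  proof -
    have "(\<lambda>i. T $$ (i,i)) ` {..<n} = insert (T $$ (n-1,n-1)) ((\<lambda>i. T $$ (i,i)) ` {..<n-1})"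
      by (subst nn) (simp add: lessThan_Suc)
    also have "(\<lambda>i. T $$ (i,i)) ` {..<n-1} = {hh l w x (n - k) | k. k < n - 1}"
      using Tdiag unfolding \<mu>_def by auto
    finally show ?thesis unfolding Tlast .
  qed
  have ev: "{k. eigenvalue (A + M) k} = insert \<delta> {hh l w x (n - k) | k. k < n - 1}"
    unfolding de(2) img ..
  show ?thesis unfolding \<delta>_def[symmetric] by (intro bexI[OF _ M] conjI MM de(1) ev)
qed


lemma two_ne0: assumes "odd CHAR('a::field)" shows "(2::'a) \<noteq> 0"
proof
  assume "(2::'a) = 0"
  hence "of_nat 2 = (0::'a)" by simp
  hence d: "CHAR('a) dvd 2" by (simp only: of_nat_eq_0_iff_char_dvd)
  have "CHAR('a) \<noteq> 0"
  proof
    assume "CHAR('a) = 0" with assms show False by simp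
  qed
  moreover have "CHAR('a) \<le> 2" using dvd_imp_le[OF d] by simp
  moreover have "CHAR('a) \<noteq> 2" using assms by auto
  ultimately have "CHAR('a) = 1" by linarith
  hence "of_nat 1 = (0::'a)" using of_nat_CHAR[where 'a='a] by simp
  thus False by simp
qed

lemma neg_ne: assumes "(2::'a::field) \<noteq> 0" "(c::'a) \<noteq> 0" shows "- c \<noteq> c"
proof
  assume "- c = c"
  hence "2 * c = 0" by (simp add: algebra_simps mult_2)
  thus False using assms by simp
qed

lemma decomp: assumes A: "(A :: 'a :: field mat) \<in> carrier_mat n n" and M: "M \<in> carrier_mat n n"
  and MM: "M * M = 0\<^sub>m n n" and d: "diagonalizable (A + M)"
  shows "\<exists>D \<in> carrier_mat n n. \<exists>M \<in> carrier_mat n n. diagonalizable D \<and> M * M = 0\<^sub>m n n \<and> A = D + M"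
proof -
  have mm: "(- M) * (- M) = M * M" by (rule eq_matI) (use M in \<open>auto simp: scalar_prod_def\<close>)
  have e: "A = (A + M) + (- M)" by (rule eq_matI) (use A M in auto)
  have c: "A + M \<in> carrier_mat n n" "- M \<in> carrier_mat n n" using A M by auto
  have m0: "(- M) * (- M) = 0\<^sub>m n n" using mm MM by simp
  show ?thesis
  proof (rule bexI[where x = "A + M"], rule bexI[where x = "- M"])
    show "diagonalizable (A + M) \<and> - M * - M = 0\<^sub>m n n \<and> A = A + M + - M" by (intro conjI d m0 e)
  qed (use c in auto)
qed

theorem proposition2p1:
  fixes n :: nat and A :: "'a :: field mat"
  assumes char_odd: "odd CHAR('a)"
    and n5: "n \<ge> 5"
    and A: "A \<in> carrier_mat n n"
    and nd: "non_derogatory A"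
  shows
    "(mat_trace A \<noteq> 0 \<longrightarrow>
       (\<exists>M \<in> carrier_mat n n. M * M = 0\<^sub>m n n \<and> diagonalizable (A + M) \<and>
          {k. eigenvalue (A + M) k} = {0, mat_trace A, - mat_trace A}))
   \<and> (mat_trace A = 0 \<and> odd n \<longrightarrow>
       (\<exists>M \<in> carrier_mat n n. M * M = 0\<^sub>m n n \<and> diagonalizable (A + M) \<and>
          {k. eigenvalue (A + M) k} = {0, 1, -1}))
   \<and> (mat_trace A = 0 \<and> even n \<and> \<not> (finite (UNIV :: 'a set) \<and> card (UNIV :: 'a set) = 3) \<longrightarrow>
       (\<exists>M \<in> carrier_mat n n. M * M = 0\<^sub>m n n \<and> diagonalizable (A + M) \<and>
          card {k. eigenvalue (A + M) k} \<le> 4))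
   \<and> (finite (UNIV :: 'a set) \<and> odd (card (UNIV :: 'a set)) \<and> card (UNIV :: 'a set) \<ge> 5 \<longrightarrow>
       (\<exists>D \<in> carrier_mat n n. \<exists>M \<in> carrier_mat n n.
          diagonalizable D \<and> M * M = 0\<^sub>m n n \<and> A = D + M))"
proof -
  define c where "c = mat_trace A"
  have two: "(2::'a) \<noteq> 0" by (rule two_ne0[OF char_odd])
  have n4: "4 \<le> n" using n5 by simp
  have one: "- (1::'a) \<noteq> 1" using neg_ne[OF two, of 1] by simp
  have P1: "\<exists>M \<in> carrier_mat n n. M * M = 0\<^sub>m n n \<and> diagonalizable (A + M) \<and>
          {k. eigenvalue (A + M) k} = {0, c, - c}" if c0: "c \<noteq> 0"
  proof (cases "even n")
    case True
    have nc: "- c \<noteq> c" by (rule neg_ne[OF two c0])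
    have "\<exists>M \<in> carrier_mat n n. M * M = 0\<^sub>m n n \<and> diagonalizable (A + M) \<and>
     {k. eigenvalue (A + M) k} = insert (mat_trace A - (0 + (if odd n then - c else 0) + (c + - c)))
        {hh 0 (- c) c (n - k) | k. k < n - 1}"
      by (rule generic[OF A nd n4]) (use True nc c0 in \<open>auto simp: c_def\<close>)
    moreover have "insert (mat_trace A - (0 + (if odd n then - c else 0) + (c + - c)))
        {hh 0 (- c) c (n - k) | k. k < n - 1} = {0, c, - c}"
      unfolding hh_set[OF n4] using True by (auto simp: c_def)
    ultimately show ?thesis by simp
  next
    case False
    have nc: "- c \<noteq> c" by (rule neg_ne[OF two c0])
    have "\<exists>M \<in> carrier_mat n n. M * M = 0\<^sub>m n n \<and> diagonalizable (A + M) \<and>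
     {k. eigenvalue (A + M) k} = insert (mat_trace A - (0 + (if odd n then c else 0) + (0 + c)))
        {hh 0 c 0 (n - k) | k. k < n - 1}"
      by (rule generic[OF A nd n4]) (use False nc c0 in \<open>auto simp: c_def\<close>)
    moreover have "insert (mat_trace A - (0 + (if odd n then c else 0) + (0 + c)))
        {hh 0 c 0 (n - k) | k. k < n - 1} = {0, c, - c}"
      unfolding hh_set[OF n4] using False by (auto simp: c_def)
    ultimately show ?thesis by simp
  qed
  have P2: "\<exists>M \<in> carrier_mat n n. M * M = 0\<^sub>m n n \<and> diagonalizable (A + M) \<and>
          {k. eigenvalue (A + M) k} = {0, 1, -1}" if c0: "c = 0" and on: "odd n"
  proof -
    have "\<exists>M \<in> carrier_mat n n. M * M = 0\<^sub>m n n \<and> diagonalizable (A + M) \<and>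
     {k. eigenvalue (A + M) k} = insert (mat_trace A - (0 + (if odd n then 1 else 0) + (- 1 + 1)))
        {hh 0 1 (- 1) (n - k) | k. k < n - 1}"
      by (rule generic[OF A nd n4]) (use on one c0 in \<open>auto simp: c_def\<close>)
    moreover have "insert (mat_trace A - (0 + (if odd n then 1 else 0) + (- 1 + 1)))
        {hh 0 1 (- 1) (n - k) | k. k < n - 1} = {0, 1, - 1}"
      unfolding hh_set[OF n4] using on c0 by (auto simp: c_def)
    ultimately show ?thesis by simp
  qed
  have P3: "\<exists>M \<in> carrier_mat n n. M * M = 0\<^sub>m n n \<and> diagonalizable (A + M) \<and>
          card {k. eigenvalue (A + M) k} \<le> 4"
    if c0: "c = 0" and en: "even n" and nF3: "\<not> (finite (UNIV :: 'a set) \<and> card (UNIV :: 'a set) = 3)"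
  proof -
    have "\<exists>t::'a. t \<notin> {0, 1, -1}"
    proof (rule ccontr)
      assume "\<not> ?thesis"
      hence U: "(UNIV :: 'a set) = {0, 1, -1}" by auto
      have "(0::'a) \<noteq> 1" "(0::'a) \<noteq> -1" "(1::'a) \<noteq> -1" using one by auto
      hence "card (UNIV :: 'a set) = 3" unfolding U by simp
      moreover have "finite (UNIV :: 'a set)" unfolding U by simp
      ultimately show False using nF3 by simp
    qed
    then obtain t :: 'a where t: "t \<noteq> 0" "t \<noteq> 1" "t \<noteq> -1" by auto
    have nt: "- t \<noteq> t" by (rule neg_ne[OF two t(1)])
    have t2: "- t \<noteq> 1" using t(3) by (metis minus_minus)
    have "\<exists>M \<in> carrier_mat n n. M * M = 0\<^sub>m n n \<and> diagonalizable (A + M) \<and>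
     {k. eigenvalue (A + M) k} = insert (mat_trace A - (t + (if odd n then 1 else 0) + (- 1 + 1)))
        {hh t 1 (- 1) (n - k) | k. k < n - 1}"
      by (rule generic[OF A nd n4]) (use en one c0 t nt t2 in \<open>auto simp: c_def\<close>)
    then obtain M where M: "M \<in> carrier_mat n n" and MM: "M * M = 0\<^sub>m n n" and dM: "diagonalizable (A + M)"
      and ev: "{k. eigenvalue (A + M) k} = insert (mat_trace A - (t + (if odd n then 1 else 0) + (- 1 + 1)))
        {hh t 1 (- 1) (n - k) | k. k < n - 1}" by blast
    have sub: "{k. eigenvalue (A + M) k} \<subseteq> {- t, t, 1, - 1}"
      unfolding ev hh_set[OF n4] using en c0 by (auto simp: c_def)
    have "card {k. eigenvalue (A + M) k} \<le> card {- t, t, 1, - (1::'a)}" by (rule card_mono[OF _ sub]) simp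
    also have "card {- t, t, 1, - (1::'a)} \<le> 4" by (auto simp: card_insert_if)
    finally have "card {k. eigenvalue (A + M) k} \<le> 4" .
    thus ?thesis using M MM dM by blast
  qed
  show ?thesis
  proof (intro conjI impI)
    assume "mat_trace A \<noteq> 0"
    thus "\<exists>M \<in> carrier_mat n n. M * M = 0\<^sub>m n n \<and> diagonalizable (A + M) \<and>
          {k. eigenvalue (A + M) k} = {0, mat_trace A, - mat_trace A}" using P1 unfolding c_def by blast
  next
    assume "mat_trace A = 0 \<and> odd n"
    thus "\<exists>M \<in> carrier_mat n n. M * M = 0\<^sub>m n n \<and> diagonalizable (A + M) \<and>
          {k. eigenvalue (A + M) k} = {0, 1, -1}" using P2 unfolding c_def by blast
  next
    assume "mat_trace A = 0 \<and> even n \<and> \<not> (finite (UNIV :: 'a set) \<and> card (UNIV :: 'a set) = 3)"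
    thus "\<exists>M \<in> carrier_mat n n. M * M = 0\<^sub>m n n \<and> diagonalizable (A + M) \<and>
          card {k. eigenvalue (A + M) k} \<le> 4" using P3 unfolding c_def by blast
  next
    assume F: "finite (UNIV :: 'a set) \<and> odd (card (UNIV :: 'a set)) \<and> card (UNIV :: 'a set) \<ge> 5"
    have "\<exists>M \<in> carrier_mat n n. M * M = 0\<^sub>m n n \<and> diagonalizable (A + M)"
    proof (cases "c = 0")
      case False thus ?thesis using P1 by blast
    next
      case True
      show ?thesis
      proof (cases "odd n")
        case True thus ?thesis using P2 \<open>c = 0\<close> by blast
      next
        case False
        have "\<not> (finite (UNIV :: 'a set) \<and> card (UNIV :: 'a set) = 3)" using F by auto
        thus ?thesis using P3 \<open>c = 0\<close> False by blast
      qed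
    qed
    thus "\<exists>D \<in> carrier_mat n n. \<exists>M \<in> carrier_mat n n. diagonalizable D \<and> M * M = 0\<^sub>m n n \<and> A = D + M"
      using decomp[OF A] by blast
  qed
qed


end
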